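(* Let $G$ be a cyclic union of component graphs $G_1,\dots,G_m$, and fix legal parameters $\varepsilon,\delta$; let $W=W(G,\varepsilon,\delta)$ and $W_{G_i}=W(G_i,\varepsilon,\delta)$. Then: (i) If some $G_i$ does not have a full-support fixed point, then $G$ does not have a full-support fixed point. (ii) If all $G_i$ have full-support fixed points, and there exists $j$ such that $G_j$ has uniform in-degree and its full-support fixed point is unstable, then $G$ has a full-support fixed point that is unstable. (iii) If all $G_i$ are cliques, then $W$ has a unique fixed point, which has full support, and this fixed point is unstable. In particular, in all these cases $G$ is not a stable motif.
   Context: For a simple directed graph $H$ on $[h]$ and legal parameters ($\delta>0$, $0<\varepsilon<\frac{\delta}{\delta+1}$), the CTLN $W(H,\varepsilon,\delta)$ is the $h\times h$ matrix with zero diagonal, $W_{ij}=-1+\varepsilon$ if $j\to i$ in $H$, $W_{ij}=-1-\delta$ if $i\ne j$ and $j\not\to i$; its dynamics are $\dot x_i=-x_i+[\sum_jW_{ij}x_j+\theta]_+$ with $\theta>0$. CTLNs are assumed nondegenerate ($\det(I-W_\sigma)\ne0$ for all principal submatrices and all Cramer determinants nonzero). A fixed point $x^*\ge0$ has support $\{i:x^*_i>0\}$; a fixed point with support $\sigma$ is stable iff all eigenvalues of $I-W_\sigma$ have positive real part, otherwise unstable. "$H$ has a full-support fixed point" means its CTLN has a fixed point with support all of $[h]$. $H$ is a stable motif if it has a full-support fixed point that is stable. A cyclic union of $G_1,\dots,G_m$ is the graph on the disjoint union of their vertex sets, keeping all edges within each $G_i$, adding all edges from every node of $G_i$ to every node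 of $G_{i+1}$ (indices mod $m$), and no other edges. A graph has uniform in-degree if all its nodes have the same in-degree. A clique is a graph in which every pair of nodes is bidirectionally connected. *)

theory Defs
  imports Complex_Main "HOL-Combinatorics.Permutations"
begin

text \<open>Graphs: a finite vertex set V :: 'a set and an edge relation E, where
  E j i means the edge j -> i. A subgraph on a vertex subset S is the induced
  graph (S, E restricted to S).\<close>

definition legal_params :: "real \<Rightarrow> real \<Rightarrow> bool" where
  "legal_params \<epsilon> \<delta> \<longleftrightarrow> \<delta> > 0 \<and> 0 < \<epsilon> \<and> \<epsilon> < \<delta> / (\<delta> + 1)"

definition ctln :: "('a \<Rightarrow> 'a \<Rightarrow> bool) \<Rightarrow> real \<Rightarrow> real \<Rightarrow> 'a \<Rightarrow> 'a \<Rightarrow> real" where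
  "ctln E \<epsilon> \<delta> i j = (if i = j then 0 else if E j i then -1 + \<epsilon> else -1 - \<delta>)"

definition IminusW :: "('a \<Rightarrow> 'a \<Rightarrow> bool) \<Rightarrow> real \<Rightarrow> real \<Rightarrow> 'a \<Rightarrow> 'a \<Rightarrow> real" where
  "IminusW E \<epsilon> \<delta> i j = (if i = j then 1 else 0) - ctln E \<epsilon> \<delta> i j"

definition det_on :: "'a set \<Rightarrow> ('a \<Rightarrow> 'a \<Rightarrow> real) \<Rightarrow> real" where
  "det_on S A = (\<Sum>p\<in>{p. p permutes S}. of_int (sign p) * (\<Prod>i\<in>S. A i (p i)))"

definition replace_col :: "('a \<Rightarrow> 'a \<Rightarrow> real) \<Rightarrow> 'a \<Rightarrow> ('a \<Rightarrow> real) \<Rightarrow> 'a \<Rightarrow> 'a \<Rightarrow> real" where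
  "replace_col A k b i j = (if j = k then b i else A i j)"

definition nondegenerate ::
  "'a set \<Rightarrow> ('a \<Rightarrow> 'a \<Rightarrow> bool) \<Rightarrow> real \<Rightarrow> real \<Rightarrow> real \<Rightarrow> bool" where
  "nondegenerate V E \<epsilon> \<delta> \<theta> \<longleftrightarrow>
     (\<forall>\<sigma>. \<sigma> \<subseteq> V \<longrightarrow> \<sigma> \<noteq> {} \<longrightarrow>
        det_on \<sigma> (IminusW E \<epsilon> \<delta>) \<noteq> 0 \<and>
        (\<forall>k\<in>\<sigma>. det_on \<sigma> (replace_col (IminusW E \<epsilon> \<delta>) k (\<lambda>_. \<theta>)) \<noteq> 0))"

text \<open>Fixed point x >= 0 of dx_i/dt = -x_i + [sum_j W_ij x_j + theta]_+ on vertex set V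
  (x vanishes outside V).\<close>
definition ctln_fixed_point ::
  "'a set \<Rightarrow> ('a \<Rightarrow> 'a \<Rightarrow> bool) \<Rightarrow> real \<Rightarrow> real \<Rightarrow> real \<Rightarrow> ('a \<Rightarrow> real) \<Rightarrow> bool" where
  "ctln_fixed_point V E \<epsilon> \<delta> \<theta> x \<longleftrightarrow>
     (\<forall>i. i \<notin> V \<longrightarrow> x i = 0) \<and>
     (\<forall>i\<in>V. x i \<ge> 0 \<and> x i = max 0 ((\<Sum>j\<in>V. ctln E \<epsilon> \<delta> i j * x j) + \<theta>))"

definition supp :: "'a set \<Rightarrow> ('a \<Rightarrow> real) \<Rightarrow> 'a set" where
  "supp V x = {i\<in>V. x i > 0}"

definition is_eigenvalue_on :: "'a set \<Rightarrow> ('a \<Rightarrow> 'a \<Rightarrow> real) \<Rightarrow> complex \<Rightarrow> bool" where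
  "is_eigenvalue_on S A lam \<longleftrightarrow>
     (\<exists>v :: 'a \<Rightarrow> complex. (\<exists>i\<in>S. v i \<noteq> 0) \<and>
        (\<forall>i\<in>S. (\<Sum>j\<in>S. complex_of_real (A i j) * v j) = lam * v i))"

definition stable_fp ::
  "'a set \<Rightarrow> ('a \<Rightarrow> 'a \<Rightarrow> bool) \<Rightarrow> real \<Rightarrow> real \<Rightarrow> ('a \<Rightarrow> real) \<Rightarrow> bool" where
  "stable_fp V E \<epsilon> \<delta> x \<longleftrightarrow>
     (\<forall>lam. is_eigenvalue_on (supp V x) (IminusW E \<epsilon> \<delta>) lam \<longrightarrow> Re lam > 0)"

definition has_full_support_fp ::
  "'a set \<Rightarrow> ('a \<Rightarrow> 'a \<Rightarrow> bool) \<Rightarrow> real \<Rightarrow> real \<Rightarrow> real \<Rightarrow> bool" where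
  "has_full_support_fp V E \<epsilon> \<delta> \<theta> \<longleftrightarrow>
     (\<exists>x. ctln_fixed_point V E \<epsilon> \<delta> \<theta> x \<and> supp V x = V)"

definition stable_motif ::
  "'a set \<Rightarrow> ('a \<Rightarrow> 'a \<Rightarrow> bool) \<Rightarrow> real \<Rightarrow> real \<Rightarrow> real \<Rightarrow> bool" where
  "stable_motif V E \<epsilon> \<delta> \<theta> \<longleftrightarrow>
     (\<exists>x. ctln_fixed_point V E \<epsilon> \<delta> \<theta> x \<and> supp V x = V \<and> stable_fp V E \<epsilon> \<delta> x)"

definition simple_digraph :: "'a set \<Rightarrow> ('a \<Rightarrow> 'a \<Rightarrow> bool) \<Rightarrow> bool" where
  "simple_digraph V E \<longleftrightarrow> finite V \<and> V \<noteq> {} \<and> (\<forall>i\<in>V. \<not> E i i)"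

definition uniform_in_degree :: "'a set \<Rightarrow> ('a \<Rightarrow> 'a \<Rightarrow> bool) \<Rightarrow> bool" where
  "uniform_in_degree V E \<longleftrightarrow> (\<exists>d. \<forall>i\<in>V. card {j\<in>V. E j i} = d)"

definition is_clique :: "'a set \<Rightarrow> ('a \<Rightarrow> 'a \<Rightarrow> bool) \<Rightarrow> bool" where
  "is_clique V E \<longleftrightarrow> (\<forall>i\<in>V. \<forall>j\<in>V. i \<noteq> j \<longrightarrow> E i j)"

definition cyclic_union ::
  "'a set \<Rightarrow> ('a \<Rightarrow> 'a \<Rightarrow> bool) \<Rightarrow> nat \<Rightarrow> (nat \<Rightarrow> 'a set) \<Rightarrow> bool" where
  "cyclic_union V E m C \<longleftrightarrow>
     (\<forall>k<m. C k \<noteq> {}) \<and>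
     (\<forall>k<m. \<forall>l<m. k \<noteq> l \<longrightarrow> C k \<inter> C l = {}) \<and>
     (\<Union>k<m. C k) = V \<and>
     (\<forall>k<m. \<forall>l<m. k \<noteq> l \<longrightarrow>
        (\<forall>j\<in>C k. \<forall>i\<in>C l. E j i \<longleftrightarrow> l = Suc k mod m))"

end

theory Submission
  imports Defs "Jordan_Normal_Form.Schur_Decomposition"
begin

lemma pos_cyc:
  fixes w b :: "nat \<Rightarrow> real"
  assumes m1: "m \<ge> 1" and b1: "\<And>l. l < m \<Longrightarrow> b l > 1"
    and rec: "\<And>l. l < m \<Longrightarrow> w l = b l * (1 - w ((l + m - 1) mod m))"
  shows "\<And>l. l < m \<Longrightarrow> 0 < w l \<and> w l < 1"
proof -
  define W where "W n = w (n mod m)" for n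
  define bad where "bad x = (x \<le> 0 \<or> x \<ge> (1::real))" for x
  define phi where "phi x = (if x \<le> 0 then - x else x - (1::real))" for x
  have step: "W (Suc n) = b (Suc n mod m) * (1 - W n)" for n
  proof -
    have "(Suc n mod m + m - 1) mod m = (Suc n mod m + (m - 1)) mod m" using m1 by simp
    also have "\<dots> = (Suc n + (m - 1)) mod m" by (simp add: mod_add_left_eq)
    also have "Suc n + (m - 1) = n + m" using m1 by simp
    also have "(n + m) mod m = n mod m" by simp
    finally show ?thesis unfolding W_def using rec[of "Suc n mod m"] m1 by simp
  qed
  have bb: "b (Suc n mod m) > 1" for n using b1 m1 by simp
  have st: "bad (W n) \<Longrightarrow> bad (W (Suc n)) \<and> phi (W (Suc n)) \<ge> phi (W n) \<and>
      (W n \<le> 0 \<longrightarrow> phi (W (Suc n)) > phi (W n))" for n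
  proof -
    assume bn: "bad (W n)"
    define c where "c = b (Suc n mod m)"
    have c1: "c > 1" using bb c_def by simp
    have ws: "W (Suc n) = c * (1 - W n)" using step c_def by simp
    show ?thesis
    proof (cases "W n \<le> 0")
      case True
      have "c * (1 - W n) > 1 - W n" using c1 True by (simp add: mult_strict_right_mono)
      hence g: "W (Suc n) > 1 - W n" using ws by simp
      hence "W (Suc n) > 1" using True by simp
      then show ?thesis using g True unfolding bad_def phi_def by auto
    next
      case False
      hence ge: "W n \<ge> 1" using bn bad_def by simp
      have "c * (W n - 1) \<ge> 1 * (W n - 1)" using c1 ge by (intro mult_right_mono) auto
      hence "c * (W n - 1) \<ge> W n - 1" by simp
      moreover have "W (Suc n) \<le> 0" using ws c1 ge by (simp add: mult_nonneg_nonpos)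
      ultimately show ?thesis using ws ge unfolding bad_def phi_def by (auto simp: algebra_simps)
    qed
  qed
  have propag: "bad (W n) \<Longrightarrow> bad (W (n + j)) \<and> phi (W (n + j)) \<ge> phi (W n)" for n j
  proof (induction j)
    case 0 then show ?case by simp
  next
    case (Suc j)
    then show ?case using st[of "n + j"] by fastforce
  qed
  fix l assume l: "l < m"
  show "0 < w l \<and> w l < 1"
  proof (rule ccontr)
    assume "\<not> (0 < w l \<and> w l < 1)"
    hence bl: "bad (W l)" unfolding W_def bad_def using l by auto
    obtain n where n: "W n \<le> 0"
    proof (cases "W l \<le> 0")
      case True then show ?thesis using that by blast
    next
      case False
      hence "W l \<ge> 1" using bl bad_def by simp
      hence "W (Suc l) \<le> 0" using step[of l] bb[of l] by (simp add: mult_nonneg_nonpos)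
      then show ?thesis using that by blast
    qed
    have bn: "bad (W n)" using n bad_def by simp
    have s1: "bad (W (Suc n))" "phi (W (Suc n)) > phi (W n)" using st[OF bn] n by auto
    have "phi (W (Suc n + (m - 1))) \<ge> phi (W (Suc n))" using propag[OF s1(1)] by blast
    moreover have "Suc n + (m - 1) = n + m" using m1 by simp
    moreover have "W (n + m) = W n" unfolding W_def by simp
    ultimately show False using s1(2) by simp
  qed
qed

fun alp :: "(nat \<Rightarrow> real) \<Rightarrow> nat \<Rightarrow> real" where
  "alp b 0 = 1" | "alp b (Suc l) = - b (Suc l) * alp b l"
fun gam :: "(nat \<Rightarrow> real) \<Rightarrow> nat \<Rightarrow> real" where
  "gam b 0 = 0" | "gam b (Suc l) = b (Suc l) * (1 - gam b l)"

lemma alp_ge: "(\<And>k. k \<le> l \<Longrightarrow> b k > 1) \<Longrightarrow> \<bar>alp b l\<bar> \<ge> 1"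
proof (induction l)
  case 0 then show ?case by simp
next
  case (Suc l)
  have "\<bar>alp b l\<bar> \<ge> 1" using Suc by auto
  moreover have "b (Suc l) > 1" using Suc by auto
  ultimately have "\<bar>b (Suc l)\<bar> * \<bar>alp b l\<bar> \<ge> 1 * 1"
    by (intro mult_mono) auto
  then show ?case by (simp add: abs_mult)
qed

lemma exists_cyc:
  fixes b :: "nat \<Rightarrow> real"
  assumes m1: "m \<ge> 1" and b1: "\<And>l. l < m \<Longrightarrow> b l > 1"
  shows "\<exists>w. \<forall>l<m. w l = b l * (1 - w ((l + m - 1) mod m))"
proof -
  define a where "a = alp b (m - 1)"
  define g where "g = gam b (m - 1)"
  have "\<bar>a\<bar> \<ge> 1" unfolding a_def using b1 m1 by (intro alp_ge) auto
  moreover have b0: "b 0 > 1" using b1[of 0] m1 by simp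
  ultimately have "b 0 * \<bar>a\<bar> \<ge> b 0 * 1" by (intro mult_left_mono) auto
  moreover have "\<bar>b 0 * a\<bar> = b 0 * \<bar>a\<bar>" using b0 by (simp add: abs_mult)
  ultimately have "\<bar>b 0 * a\<bar> > 1" using b0 by linarith
  hence den: "1 + b 0 * a \<noteq> 0" by auto
  define t where "t = b 0 * (1 - g) / (1 + b 0 * a)"
  have tt: "t = b 0 * (1 - (a * t + g))"
    using den unfolding t_def by (simp add: field_simps)
  define w where "w l = alp b l * t + gam b l" for l
  show ?thesis
  proof (intro exI allI impI)
    fix l assume l: "l < m"
    show "w l = b l * (1 - w ((l + m - 1) mod m))"
    proof (cases l)
      case 0
      have "(0 + m - 1) mod m = m - 1" using m1 by simp
      then show ?thesis using 0 tt unfolding w_def a_def g_def by simp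
    next
      case (Suc l')
      have "(l + m - 1) mod m = l'" using Suc l by simp
      then show ?thesis using Suc unfolding w_def by (simp add: algebra_simps)
    qed
  qed
qed



lemma fp_nn: "ctln_fixed_point S E eps dl th x \<Longrightarrow> x i \<ge> 0"
  unfolding ctln_fixed_point_def by (metis order_refl)
lemma fp_out: "ctln_fixed_point S E eps dl th x \<Longrightarrow> i \<notin> S \<Longrightarrow> x i = 0"
  unfolding ctln_fixed_point_def by blast
lemma fp_eq: "ctln_fixed_point S E eps dl th x \<Longrightarrow> i \<in> S \<Longrightarrow>
    x i = max 0 ((\<Sum>j\<in>S. ctln E eps dl i j * x j) + th)"
  unfolding ctln_fixed_point_def by blast

locale cun =
  fixes V :: "'a set" and E :: "'a \<Rightarrow> 'a \<Rightarrow> bool" and m :: nat and C :: "nat \<Rightarrow> 'a set"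
    and eps dl th :: real
  assumes graph: "simple_digraph V E" and m3: "m \<ge> 3" and cu: "cyclic_union V E m C"
    and legal: "legal_params eps dl" and theta: "th > 0"
begin

definition prd :: "nat \<Rightarrow> nat" where "prd l = (l + m - 1) mod m"

lemma finV: "finite V" using graph by (simp add: simple_digraph_def)
lemma irr: "i \<in> V \<Longrightarrow> \<not> E i i" using graph by (simp add: simple_digraph_def)
lemma cne: "k < m \<Longrightarrow> C k \<noteq> {}" using cu by (simp add: cyclic_union_def)
lemma cdisj: "k < m \<Longrightarrow> l < m \<Longrightarrow> k \<noteq> l \<Longrightarrow> C k \<inter> C l = {}" using cu by (simp add: cyclic_union_def)
lemma cV: "(\<Union>k<m. C k) = V" using cu by (simp add: cyclic_union_def)
lemma cE: "k < m \<Longrightarrow> l < m \<Longrightarrow> k \<noteq> l \<Longrightarrow> j \<in> C k \<Longrightarrow> i \<in> C l \<Longrightarrow> E j i \<longleftrightarrow> l = Suc k mod m"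
  using cu by (simp add: cyclic_union_def)
lemma CV: "k < m \<Longrightarrow> C k \<subseteq> V" using cV by blast
lemma finC: "k < m \<Longrightarrow> finite (C k)" using CV finV finite_subset by blast
lemma inV: "i \<in> V \<Longrightarrow> \<exists>l<m. i \<in> C l" using cV by blast
lemma uniqC: "k < m \<Longrightarrow> l < m \<Longrightarrow> i \<in> C k \<Longrightarrow> i \<in> C l \<Longrightarrow> k = l" using cdisj by blast

lemma dl0: "dl > 0" and eps0: "eps > 0" and eps1: "eps < 1" and epsdl: "eps < dl"
  and big: "(1 - eps) * (1 + dl) > 1"
proof -
  show d: "dl > 0" and e: "eps > 0" using legal by (auto simp: legal_params_def)
  have l: "eps < dl / (dl + 1)" using legal by (simp add: legal_params_def)
  hence l2: "eps * (dl + 1) < dl" using d by (simp add: field_simps)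
  have "eps * (dl + 1) < 1 * (dl + 1)" using l2 by simp
  thus "eps < 1" by (rule mult_right_less_imp_less) (use d in simp)
  have "eps * dl > 0" using d e by simp
  thus "eps < dl" using l2 by (simp add: algebra_simps)
  show "(1 - eps) * (1 + dl) > 1" using l2 by (simp add: algebra_simps)
qed

lemma prd_alt: "l < m \<Longrightarrow> prd l = (if l = 0 then m - 1 else l - 1)"
proof -
  assume l: "l < m"
  show ?thesis
  proof (cases l)
    case 0 then show ?thesis using m3 by (simp add: prd_def)
  next
    case (Suc l')
    have "l + m - 1 = l' + m" using Suc by simp
    then show ?thesis using Suc l by (simp add: prd_def)
  qed
qed

lemma prd_lt: "l < m \<Longrightarrow> prd l < m" using m3 by (simp add: prd_def)
lemma prd_ne: "l < m \<Longrightarrow> prd l \<noteq> l" using m3 by (auto simp: prd_alt)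
lemma suc_alt: "k < m \<Longrightarrow> Suc k mod m = (if k = m - 1 then 0 else Suc k)"
  using m3 by auto
lemma prd_iff: "l < m \<Longrightarrow> k < m \<Longrightarrow> (l = Suc k mod m) \<longleftrightarrow> (k = prd l)"
  using m3 by (auto simp: prd_alt suc_alt)
lemma prd_suc: "l < m \<Longrightarrow> prd (Suc l mod m) = l"
  using prd_iff[of "Suc l mod m" l] m3 by simp
lemma prd_prd_ne: "l < m \<Longrightarrow> prd (prd l) \<noteq> l"
  using m3 by (auto simp: prd_alt)

lemma sumV: "(\<Sum>j\<in>V. g j) = (\<Sum>k<m. \<Sum>j\<in>C k. g j)"
proof -
  have "(\<Sum>j\<in>V. g j) = (\<Sum>j\<in>(\<Union>k<m. C k). g j)" using cV by simp
  also have "\<dots> = (\<Sum>k<m. \<Sum>j\<in>C k. g j)"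
    by (rule sum.UNION_disjoint) (auto simp: finC dest: cdisj)
  finally show ?thesis .
qed

lemma ctln_out: "k < m \<Longrightarrow> l < m \<Longrightarrow> k \<noteq> l \<Longrightarrow> i \<in> C l \<Longrightarrow> j \<in> C k \<Longrightarrow>
    ctln E eps dl i j = (if k = prd l then -1 + eps else -1 - dl)"
proof -
  assume a: "k < m" "l < m" "k \<noteq> l" "i \<in> C l" "j \<in> C k"
  have "i \<noteq> j" using a cdisj by blast
  moreover have "E j i \<longleftrightarrow> k = prd l" using cE[OF a(1,2,3,5,4)] prd_iff a by simp
  ultimately show ?thesis by (simp add: ctln_def)
qed

lemma ctln_in: "i \<noteq> j \<Longrightarrow> -1 - dl \<le> ctln E eps dl i j \<and> ctln E eps dl i j \<le> -1 + eps"
  using dl0 eps0 by (simp add: ctln_def)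

lemma ctln_self: "ctln E eps dl i i = 0" by (simp add: ctln_def)

definition XS :: "('a \<Rightarrow> real) \<Rightarrow> nat \<Rightarrow> real" where "XS x k = (\<Sum>j\<in>C k. x j)"

lemma key:
  assumes l: "l < m" and i: "i \<in> C l"
  shows "(\<Sum>j\<in>V. ctln E eps dl i j * x j) = (\<Sum>j\<in>C l. ctln E eps dl i j * x j)
     - (1 + dl) * ((\<Sum>k<m. XS x k) - XS x l) + (dl + eps) * XS x (prd l)"
proof -
  define F where "F k = (\<Sum>j\<in>C k. ctln E eps dl i j * x j)" for k
  have Fk: "F k = - (1 + dl) * XS x k + (if k = prd l then (dl + eps) * XS x k else 0)"
    if k: "k < m" "k \<noteq> l" for k
  proof -
    have "F k = (\<Sum>j\<in>C k. (if k = prd l then -1 + eps else -1 - dl) * x j)"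
      unfolding F_def using ctln_out[OF k(1) l k(2) i] by simp
    also have "\<dots> = (if k = prd l then -1 + eps else -1 - dl) * XS x k"
      by (simp add: XS_def sum_distrib_left)
    finally show ?thesis by (simp add: algebra_simps)
  qed
  have "(\<Sum>j\<in>V. ctln E eps dl i j * x j) = (\<Sum>k<m. F k)" unfolding F_def by (rule sumV)
  also have "\<dots> = F l + (\<Sum>k\<in>{..<m} - {l}. F k)" using l by (simp add: sum.remove)
  also have "(\<Sum>k\<in>{..<m} - {l}. F k) = (\<Sum>k\<in>{..<m} - {l}. - (1 + dl) * XS x k + (if k = prd l then (dl + eps) * XS x k else 0))"
    using Fk by (intro sum.cong) auto
  also have "\<dots> = - (1 + dl) * (\<Sum>k\<in>{..<m} - {l}. XS x k) + (dl + eps) * XS x (prd l)"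
    using prd_lt[OF l] prd_ne[OF l] by (simp add: sum.distrib sum_distrib_left[symmetric])
  also have "(\<Sum>k\<in>{..<m} - {l}. XS x k) = (\<Sum>k<m. XS x k) - XS x l"
    using l by (simp add: sum_diff1)
  finally have eq: "(\<Sum>j\<in>V. ctln E eps dl i j * x j) = F l + (- (1 + dl) * ((\<Sum>k<m. XS x k) - XS x l) + (dl + eps) * XS x (prd l))" .
  have gen: "\<And>a b c d::real. a = b + (- (1 + dl) * c + d) \<Longrightarrow> a = b - (1 + dl) * c + d"
    by (simp add: algebra_simps)
  show ?thesis using gen[OF eq] unfolding F_def .
qed

lemma part1:
  assumes "has_full_support_fp V E eps dl th"
  shows "\<forall>k<m. has_full_support_fp (C k) E eps dl th"
proof (intro allI impI)
  fix l assume l: "l < m"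
  from assms obtain x where fp: "ctln_fixed_point V E eps dl th x" and sp: "supp V x = V"
    unfolding has_full_support_fp_def by blast
  have xpos: "i \<in> V \<Longrightarrow> x i > 0" for i using sp by (auto simp: supp_def)
  have xnn: "x i \<ge> 0" for i using fp by (rule fp_nn)
  have xeq: "i \<in> V \<Longrightarrow> x i = (\<Sum>j\<in>V. ctln E eps dl i j * x j) + th" for i
  proof -
    assume i: "i \<in> V"
    have "x i = max 0 ((\<Sum>j\<in>V. ctln E eps dl i j * x j) + th)" using fp i by (rule fp_eq)
    thus ?thesis using xpos[OF i] by (simp add: max_def split: if_splits)
  qed
  define h where "h = th - (1 + dl) * ((\<Sum>k<m. XS x k) - XS x l) + (dl + eps) * XS x (prd l)"
  have xl: "i \<in> C l \<Longrightarrow> x i = h + (\<Sum>j\<in>C l. ctln E eps dl i j * x j)" for i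
    using xeq[of i] key[OF l, of i x] CV[OF l] unfolding h_def by auto
  have neg: "(\<Sum>j\<in>C l. ctln E eps dl i j * x j) \<le> 0" for i
  proof (rule sum_nonpos)
    fix j show "ctln E eps dl i j * x j \<le> 0"
      using ctln_in[of i j] xnn[of j] ctln_self[of i] dl0 eps1
      by (cases "i = j") (auto intro: mult_nonpos_nonneg)
  qed
  obtain i0 where i0: "i0 \<in> C l" using cne[OF l] by blast
  have hpos: "h > 0" using xl[OF i0] neg[of i0] xpos[of i0] CV[OF l] i0 by force
  define y where "y j = (if j \<in> C l then th / h * x j else 0)" for j
  show "has_full_support_fp (C l) E eps dl th"
    unfolding has_full_support_fp_def
  proof (intro exI conjI)
    have yi: "y i = (\<Sum>j\<in>C l. ctln E eps dl i j * y j) + th" if i: "i \<in> C l" for i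
    proof -
      have "(\<Sum>j\<in>C l. ctln E eps dl i j * y j) = th / h * (\<Sum>j\<in>C l. ctln E eps dl i j * x j)"
        unfolding y_def by (simp add: sum_distrib_left algebra_simps)
      also have "\<dots> = th / h * (x i - h)" using xl[OF i] by simp
      finally show ?thesis using i hpos unfolding y_def by (simp add: field_simps)
    qed
    have ypos: "i \<in> C l \<Longrightarrow> y i > 0" for i
      using xpos[of i] CV[OF l] hpos theta unfolding y_def by auto
    show "ctln_fixed_point (C l) E eps dl th y"
      unfolding ctln_fixed_point_def
    proof (intro conjI allI impI ballI)
      fix i assume "i \<notin> C l" then show "y i = 0" by (simp add: y_def)
    next
      fix i assume i: "i \<in> C l"
      show "0 \<le> y i" using ypos[OF i] by simp
      show "y i = max 0 ((\<Sum>j\<in>C l. ctln E eps dl i j * y j) + th)"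
        using yi[OF i] ypos[OF i] by simp
    qed
    show "supp (C l) y = C l" using ypos by (auto simp: supp_def)
  qed
qed


lemma alg_fp:
  fixes S e D P wl wp :: real
  assumes S: "S > 0" and e: "e > 0" and D: "D = (1 + dl) * S - th" and wl: "wl * D = e * S * (1 - wp)"
  shows "- (P * wl / e) / S * th - P + (1 + dl) * (P * wl / e) + e * (P * wp / e) = 0"
proof -
  have "e * S * (- (P * wl / e) / S * th - P + (1 + dl) * (P * wl / e) + e * (P * wp / e))
      = P * (wl * D - e * S * (1 - wp))"
    using S e unfolding D by (simp add: field_simps)
  also have "\<dots> = 0" using wl by simp
  finally show ?thesis using S e by simp
qed

lemma fp_bounds:
  assumes k: "k < m" and fp: "ctln_fixed_point (C k) E eps dl th y" and sp: "supp (C k) y = C k"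
  shows "(1 + dl) * (\<Sum>j\<in>C k. y j) > th \<and> (1 - eps) * (\<Sum>j\<in>C k. y j) < th"
proof -
  obtain i where i: "i \<in> C k" using cne[OF k] by blast
  have ypos: "y i > 0" using sp i by (auto simp: supp_def)
  have ynn: "y j \<ge> 0" for j using fp by (rule fp_nn)
  have yeq: "y i = (\<Sum>j\<in>C k. ctln E eps dl i j * y j) + th"
  proof -
    have "y i = max 0 ((\<Sum>j\<in>C k. ctln E eps dl i j * y j) + th)" using fp i by (rule fp_eq)
    thus ?thesis using ypos by (simp add: max_def split: if_splits)
  qed
  define s where "s = (\<Sum>j\<in>C k. y j)"
  have fin: "finite (C k)" using finC[OF k] .
  have lo: "(\<Sum>j\<in>C k. ctln E eps dl i j * y j) \<ge> (\<Sum>j\<in>C k. - (1 + dl) * y j + (if j = i then (1 + dl) * y j else 0))"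
  proof (rule sum_mono)
    fix j assume "j \<in> C k"
    show "- (1 + dl) * y j + (if j = i then (1 + dl) * y j else 0) \<le> ctln E eps dl i j * y j"
    proof (cases "j = i")
      case True then show ?thesis by (simp add: ctln_self algebra_simps)
    next
      case False
      then show ?thesis using ctln_in[of i j] ynn[of j] by (simp add: mult_right_mono)
    qed
  qed
  have up: "(\<Sum>j\<in>C k. ctln E eps dl i j * y j) \<le> (\<Sum>j\<in>C k. - (1 - eps) * y j + (if j = i then (1 - eps) * y j else 0))"
  proof (rule sum_mono)
    fix j assume "j \<in> C k"
    show "ctln E eps dl i j * y j \<le> - (1 - eps) * y j + (if j = i then (1 - eps) * y j else 0)"
    proof (cases "j = i")
      case True then show ?thesis by (simp add: ctln_self algebra_simps)
    next
      case False
      then show ?thesis using ctln_in[of i j] ynn[of j] by (simp add: mult_right_mono)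
    qed
  qed
  have s1: "(\<Sum>j\<in>C k. - (1 + dl) * y j + (if j = i then (1 + dl) * y j else 0)) = - (1 + dl) * s + (1 + dl) * y i"
    using fin i by (simp add: sum.distrib sum_distrib_left[symmetric] s_def)
  have s2: "(\<Sum>j\<in>C k. - (1 - eps) * y j + (if j = i then (1 - eps) * y j else 0)) = - (1 - eps) * s + (1 - eps) * y i"
    using fin i by (simp add: sum.distrib sum_distrib_left[symmetric] s_def)
  have "(1 + dl) * s \<ge> th + dl * y i" using lo s1 yeq by (simp add: algebra_simps)
  moreover have "(1 - eps) * s \<le> th - eps * y i" using up s2 yeq by (simp add: algebra_simps)
  moreover have "dl * y i > 0" "eps * y i > 0" using dl0 eps0 ypos by auto
  ultimately show ?thesis unfolding s_def by linarith
qed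

lemma exist_full:
  assumes "\<forall>k<m. has_full_support_fp (C k) E eps dl th"
  shows "\<exists>x. ctln_fixed_point V E eps dl th x \<and> supp V x = V"
proof -
  have "\<forall>k. \<exists>y. k < m \<longrightarrow> ctln_fixed_point (C k) E eps dl th y \<and> supp (C k) y = C k"
    using assms unfolding has_full_support_fp_def by blast
  then obtain Y where Y: "\<And>k. k < m \<Longrightarrow> ctln_fixed_point (C k) E eps dl th (Y k) \<and> supp (C k) (Y k) = C k"
    by metis
  have Ypos: "k < m \<Longrightarrow> i \<in> C k \<Longrightarrow> Y k i > 0" for k i using Y[of k] by (auto simp: supp_def)
  have Yeq: "k < m \<Longrightarrow> i \<in> C k \<Longrightarrow> Y k i = (\<Sum>j\<in>C k. ctln E eps dl i j * Y k j) + th" for k i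
  proof -
    assume k: "k < m" and i: "i \<in> C k"
    have "Y k i = max 0 ((\<Sum>j\<in>C k. ctln E eps dl i j * Y k j) + th)" using Y[OF k] i by (blast intro: fp_eq)
    thus ?thesis using Ypos[OF k i] by (simp add: max_def split: if_splits)
  qed
  define s where "s k = (\<Sum>j\<in>C k. Y k j)" for k
  have bnd: "k < m \<Longrightarrow> (1 + dl) * s k > th \<and> (1 - eps) * s k < th" for k
    using fp_bounds[of k "Y k"] Y unfolding s_def by blast
  have spos: "k < m \<Longrightarrow> s k > 0" for k
  proof -
    assume k: "k < m"
    have "(1 + dl) * s k > 0" using bnd[OF k] theta by linarith
    thus "s k > 0" using dl0 by (simp add: zero_less_mult_iff)
  qed
  define e where "e = dl + eps"
  have e0: "e > 0" and e1: "e < 1 + dl" using dl0 eps0 eps1 unfolding e_def by auto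
  define b where "b k = e * s k / ((1 + dl) * s k - th)" for k
  have b1: "k < m \<Longrightarrow> b k > 1" for k
  proof -
    assume k: "k < m"
    have d: "(1 + dl) * s k - th > 0" using bnd[OF k] by simp
    have "e * s k > (1 + dl) * s k - th" using bnd[OF k] unfolding e_def by (simp add: algebra_simps)
    thus ?thesis using d unfolding b_def by simp
  qed
  have m1: "m \<ge> 1" using m3 by simp
  have "\<exists>w. \<forall>l<m. w l = b l * (1 - w ((l + m - 1) mod m))"
    by (rule exists_cyc[where m=m and b=b, OF m1 b1])
  then obtain w where w: "\<forall>l<m. w l = b l * (1 - w ((l + m - 1) mod m))" by blast
  have wrec: "\<And>l. l < m \<Longrightarrow> w l = b l * (1 - w ((l + m - 1) mod m))" using w by blast
  have wr: "l < m \<Longrightarrow> w l = b l * (1 - w (prd l))" for l unfolding prd_def using w by blast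
  have wpos: "l < m \<Longrightarrow> 0 < w l \<and> w l < 1" for l
  proof -
    assume l: "l < m"
    show "0 < w l \<and> w l < 1"
      using pos_cyc[where m=m and b=b and w=w, OF m1 b1 wrec l] .
  qed
  define SW where "SW = (\<Sum>l<m. w l)"
  have SW1: "SW > 1"
  proof -
    have p1: "prd 1 = 0" using m3 by (simp add: prd_alt)
    have "w 1 = b 1 * (1 - w 0)" using wr[of 1] p1 m3 by simp
    moreover have "b 1 * (1 - w 0) > 1 * (1 - w 0)"
      using b1[of 1] wpos[of 0] m3 by (intro mult_strict_right_mono) auto
    ultimately have "w 0 + w 1 > 1" by simp
    moreover have "(\<Sum>l\<in>{0,1}. w l) \<le> SW" unfolding SW_def
      using wpos m3 by (intro sum_mono2) (auto intro: less_imp_le)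
    ultimately show ?thesis by simp
  qed
  have den: "(1 + dl) * SW / e - 1 > 0"
  proof -
    have "(1 + dl) * SW > (1 + dl) * 1" using SW1 dl0 by (intro mult_strict_left_mono) auto
    hence "(1 + dl) * SW > e" using e1 by simp
    thus ?thesis using e0 by (simp add: field_simps)
  qed
  define Dn where "Dn = (1 + dl) * SW / e - 1"
  have Dn0: "Dn > 0" using den unfolding Dn_def .
  define P where "P = th / Dn"
  have Ppos: "P > 0" using Dn0 theta unfolding P_def by simp
  have PT: "(1 + dl) * (P * SW / e) = P + th"
  proof -
    have "P * Dn = th" using Dn0 unfolding P_def by simp
    hence "P * ((1 + dl) * SW / e) - P = th" unfolding Dn_def by (simp add: right_diff_distrib)
    moreover have "(1 + dl) * (P * SW / e) = P * ((1 + dl) * SW / e)" by simp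
    ultimately show ?thesis by linarith
  qed
  define u where "u l = P * w l / e" for l
  define c where "c l = u l / s l" for l
  have cpos: "l < m \<Longrightarrow> c l > 0" for l using Ppos wpos[of l] e0 spos[of l] unfolding c_def u_def by simp
  define cm where "cm i = (THE l. l < m \<and> i \<in> C l)" for i
  have cmC: "l < m \<Longrightarrow> i \<in> C l \<Longrightarrow> cm i = l" for l i
    unfolding cm_def by (rule the_equality) (auto dest: uniqC)
  define x where "x i = (if i \<in> V then c (cm i) * Y (cm i) i else 0)" for i
  have xC: "l < m \<Longrightarrow> i \<in> C l \<Longrightarrow> x i = c l * Y l i" for l i
    using cmC CV unfolding x_def by auto
  have XSx: "l < m \<Longrightarrow> XS x l = u l" for l
  proof -
    assume l: "l < m"
    have "XS x l = (\<Sum>j\<in>C l. c l * Y l j)" unfolding XS_def using xC[OF l] by simp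
    also have "\<dots> = c l * s l" by (simp add: s_def sum_distrib_left)
    finally show ?thesis using spos[OF l] unfolding c_def by simp
  qed
  have Tsum: "(\<Sum>k<m. XS x k) = P * SW / e"
  proof -
    have "(\<Sum>k<m. XS x k) = (\<Sum>k<m. P / e * w k)" using XSx by (simp add: u_def)
    also have "\<dots> = P * SW / e" unfolding SW_def sum_distrib_left sum_divide_distrib by simp
    finally show ?thesis .
  qed
  have xpos: "i \<in> V \<Longrightarrow> x i > 0" for i
  proof -
    assume "i \<in> V"
    then obtain l where l: "l < m" "i \<in> C l" using inV by blast
    thus ?thesis using xC cpos Ypos by simp
  qed
  have xeq: "i \<in> V \<Longrightarrow> x i = (\<Sum>j\<in>V. ctln E eps dl i j * x j) + th" for i
  proof -
    assume "i \<in> V"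
    then obtain l where l: "l < m" and i: "i \<in> C l" using inV by blast
    have pl: "prd l < m" using prd_lt[OF l] .
    have inner: "(\<Sum>j\<in>C l. ctln E eps dl i j * x j) = c l * (Y l i - th)"
    proof -
      have "(\<Sum>j\<in>C l. ctln E eps dl i j * x j) = c l * (\<Sum>j\<in>C l. ctln E eps dl i j * Y l j)"
        using xC[OF l] by (simp add: sum_distrib_left algebra_simps)
      thus ?thesis using Yeq[OF l i] by simp
    qed
    have al: "- (P * w l / e) / s l * th - P + (1 + dl) * (P * w l / e) + e * (P * w (prd l) / e) = 0"
    proof (rule alg_fp[OF spos[OF l] e0 refl])
      have "(1 + dl) * s l - th > 0" using bnd[OF l] by simp
      thus "w l * ((1 + dl) * s l - th) = e * s l * (1 - w (prd l))"
        using wr[OF l] unfolding b_def by simp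
    qed
    have "(\<Sum>j\<in>V. ctln E eps dl i j * x j) + th
        = c l * (Y l i - th) - (1 + dl) * (P * SW / e - u l) + e * u (prd l) + th"
      using key[OF l i, of x] inner Tsum XSx[OF l] XSx[OF pl] unfolding e_def by simp
    also have "\<dots> = c l * Y l i + (- u l / s l * th - P + (1 + dl) * u l + e * u (prd l))"
    proof -
      have A: "(1 + dl) * (P * SW / e - u l) = (P + th) - (1 + dl) * u l"
        using PT by (simp add: right_diff_distrib)
      have B: "c l * (Y l i - th) = c l * Y l i - u l / s l * th"
        unfolding c_def by (simp add: right_diff_distrib)
      show ?thesis using A B by linarith
    qed
    also have "\<dots> = x i" using al xC[OF l i] unfolding u_def by simp
    finally show ?thesis by simp
  qed
  show ?thesis
  proof (intro exI conjI)
    show "ctln_fixed_point V E eps dl th x"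
      unfolding ctln_fixed_point_def
    proof (intro conjI allI impI ballI)
      fix i assume "i \<notin> V" then show "x i = 0" by (simp add: x_def)
    next
      fix i assume i: "i \<in> V"
      show "0 \<le> x i" using xpos[OF i] by simp
      show "x i = max 0 ((\<Sum>j\<in>V. ctln E eps dl i j * x j) + th)"
        using xeq[OF i] xpos[OF i] by simp
    qed
    show "supp V x = V" using xpos by (auto simp: supp_def)
  qed
qed

end


lemma grow_cyc:
  fixes X b :: "nat \<Rightarrow> real"
  assumes m1: "m \<ge> 1" and b1: "\<And>l. l < m \<Longrightarrow> b l > 1"
    and rec: "\<And>l. l < m \<Longrightarrow> X l = - b l * X ((l + m - 1) mod m)"
  shows "\<And>l. l < m \<Longrightarrow> X l = 0"
proof -
  define W where "W n = \<bar>X (n mod m)\<bar>" for n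
  have step: "W (Suc n) = b (Suc n mod m) * W n" for n
  proof -
    have "(Suc n mod m + m - 1) mod m = (Suc n mod m + (m - 1)) mod m" using m1 by simp
    also have "\<dots> = (Suc n + (m - 1)) mod m" by (simp add: mod_add_left_eq)
    also have "Suc n + (m - 1) = n + m" using m1 by simp
    also have "(n + m) mod m = n mod m" by simp
    finally have "X (Suc n mod m) = - b (Suc n mod m) * X (n mod m)" using rec[of "Suc n mod m"] m1 by simp
    moreover have "b (Suc n mod m) > 1" using b1 m1 by simp
    ultimately show ?thesis unfolding W_def by (simp add: abs_mult)
  qed
  have bb: "b (Suc n mod m) > 1" for n using b1 m1 by simp
  have mono1: "W (Suc n) \<ge> W n" for n
  proof -
    have "b (Suc n mod m) * W n \<ge> 1 * W n" using bb[of n] unfolding W_def by (intro mult_right_mono) auto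
    thus ?thesis using step by simp
  qed
  have strict: "W n > 0 \<Longrightarrow> W (Suc n) > W n" for n
  proof -
    assume "W n > 0"
    hence "b (Suc n mod m) * W n > 1 * W n" using bb[of n] by (intro mult_strict_right_mono) auto
    thus ?thesis using step by simp
  qed
  have propag: "W (n + j) \<ge> W n" for n j
  proof (induction j)
    case 0 then show ?case by simp
  next
    case (Suc j) then show ?case using mono1[of "n + j"] by simp
  qed
  fix l assume l: "l < m"
  show "X l = 0"
  proof (rule ccontr)
    assume "X l \<noteq> 0"
    hence "W l > 0" unfolding W_def using l by simp
    hence s: "W (Suc l) > W l" by (rule strict)
    have "W (Suc l + (m - 1)) \<ge> W (Suc l)" by (rule propag)
    moreover have "Suc l + (m - 1) = l + m" using m1 by simp
    moreover have "W (l + m) = W l" unfolding W_def by simp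
    ultimately show False using s by simp
  qed
qed

context cun
begin

lemma clique_ctln: "is_clique (C l) E \<Longrightarrow> i \<in> C l \<Longrightarrow> j \<in> C l \<Longrightarrow> i \<noteq> j \<Longrightarrow> ctln E eps dl i j = -1 + eps"
  by (simp add: is_clique_def ctln_def)

lemma clique_inner:
  assumes cl: "is_clique (C l) E" and l: "l < m" and i: "i \<in> C l"
  shows "(\<Sum>j\<in>C l. ctln E eps dl i j * x j) = - (1 - eps) * (XS x l - x i)"
proof -
  have "(\<Sum>j\<in>C l. ctln E eps dl i j * x j) = (\<Sum>j\<in>C l. - (1 - eps) * x j + (if j = i then (1 - eps) * x j else 0))"
  proof (intro sum.cong refl)
    fix j assume j: "j \<in> C l"
    show "ctln E eps dl i j * x j = - (1 - eps) * x j + (if j = i then (1 - eps) * x j else 0)"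
    proof (cases "i = j")
      case True thus ?thesis by (simp add: ctln_self algebra_simps)
    next
      case False
      have c: "ctln E eps dl i j = -1 + eps" using clique_ctln[OF cl i j False] .
      show ?thesis using False by (simp only: c) (simp add: algebra_simps)
    qed
  qed
  also have "\<dots> = - (1 - eps) * XS x l + (1 - eps) * x i"
    using i finC[OF l] by (simp add: sum.distrib sum_distrib_left[symmetric] XS_def)
  finally show ?thesis by (simp add: algebra_simps)
qed

lemma XS_card: "l < m \<Longrightarrow> (\<And>i. i \<in> C l \<Longrightarrow> x i = a) \<Longrightarrow> XS x l = real (card (C l)) * a"
  unfolding XS_def by simp

lemma card_ge1: "l < m \<Longrightarrow> real (card (C l)) \<ge> 1"
  using cne finC by (simp add: Suc_le_eq card_gt_0_iff)

lemma all_full: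
  assumes cl: "\<forall>k<m. is_clique (C k) E" and fp: "ctln_fixed_point V E eps dl th y"
  shows "\<forall>i\<in>V. y i > 0"
proof -
  have ynn: "y i \<ge> 0" for i using fp by (rule fp_nn)
  define T where "T = (\<Sum>k<m. XS y k)"
  define P where "P = (1 + dl) * T - th"
  define e where "e = dl + eps"
  define q where "q l = e * (XS y l + XS y (prd l)) - P" for l
  have arg: "(\<Sum>j\<in>V. ctln E eps dl i j * y j) + th = (1 - eps) * y i + q l"
    if l: "l < m" and i: "i \<in> C l" for l i
  proof -
    have "(\<Sum>j\<in>V. ctln E eps dl i j * y j) + th
        = - (1 - eps) * (XS y l - y i) - (1 + dl) * (T - XS y l) + (dl + eps) * XS y (prd l) + th"
      using key[OF l i, of y] clique_inner[OF cl[rule_format, OF l] l i, of y] unfolding T_def by simp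
    thus ?thesis unfolding q_def P_def e_def by (simp add: algebra_simps)
  qed
  have yeq: "y i = max 0 ((1 - eps) * y i + q l)" if l: "l < m" and i: "i \<in> C l" for l i
    using fp_eq[OF fp, of i] CV[OF l] i arg[OF l i] by auto
  have pos_case: "y i > 0 \<Longrightarrow> eps * y i = q l" if l: "l < m" and i: "i \<in> C l" for l i
  proof -
    assume "y i > 0"
    hence "y i = (1 - eps) * y i + q l" using yeq[OF l i] by (simp add: max_def split: if_splits)
    thus ?thesis by (simp add: algebra_simps)
  qed
  have zero_case: "y i = 0 \<Longrightarrow> q l \<le> 0" if l: "l < m" and i: "i \<in> C l" for l i
  proof -
    assume "y i = 0"
    thus ?thesis using yeq[OF l i] by (simp add: max_def split: if_splits)
  qed
  have on: "q l > 0 \<Longrightarrow> (\<forall>i\<in>C l. y i = q l / eps) \<and> XS y l = real (card (C l)) * (q l / eps)"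
    if l: "l < m" for l
  proof -
    assume ql: "q l > 0"
    have a: "\<forall>i\<in>C l. y i = q l / eps"
    proof
      fix i assume i: "i \<in> C l"
      have "y i \<noteq> 0" using zero_case[OF l i] ql by force
      hence "y i > 0" using ynn[of i] by simp
      thus "y i = q l / eps" using pos_case[OF l i] eps0 by (simp add: field_simps)
    qed
    thus ?thesis using XS_card[OF l, of y "q l / eps"] by simp
  qed
  have off: "q l \<le> 0 \<Longrightarrow> (\<forall>i\<in>C l. y i = 0) \<and> XS y l = 0" if l: "l < m" for l
  proof -
    assume ql: "q l \<le> 0"
    have a: "\<forall>i\<in>C l. y i = 0"
    proof
      fix i assume i: "i \<in> C l"
      show "y i = 0"
      proof (rule ccontr)
        assume "y i \<noteq> 0"
        hence "y i > 0" using ynn[of i] by simp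
        hence "eps * y i = q l" using pos_case[OF l i] by simp
        moreover have "eps * y i > 0" using `y i > 0` eps0 by simp
        ultimately show False using ql by simp
      qed
    qed
    thus ?thesis using XS_card[OF l, of y 0] by simp
  qed
  have allpos: "\<forall>l<m. q l > 0"
  proof (rule ccontr)
    assume "\<not> (\<forall>l<m. q l > 0)"
    then obtain k where k: "k < m" "q k \<le> 0" by force
    show False
    proof (cases "\<forall>l<m. q l \<le> 0")
      case True
      hence "\<forall>l<m. XS y l = 0" using off by blast
      hence "T = 0" unfolding T_def by simp
      hence "q k = th" unfolding q_def P_def using `\<forall>l<m. XS y l = 0` k prd_lt by simp
      thus False using k theta by simp
    next
      case False
      then obtain k' where k': "k' < m" "q k' > 0" by force
      have "\<exists>l<m. q l \<le> 0 \<and> q (Suc l mod m) > 0"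
      proof (rule ccontr)
        assume nex: "\<not> (\<exists>l<m. q l \<le> 0 \<and> q (Suc l mod m) > 0)"
        have "q ((k + j) mod m) \<le> 0" for j
        proof (induction j)
          case 0 then show ?case using k by simp
        next
          case (Suc j)
          have "(k + j) mod m < m" using k by simp
          hence "q (Suc ((k + j) mod m) mod m) \<le> 0" using nex Suc by force
          moreover have "Suc ((k + j) mod m) mod m = (k + Suc j) mod m" by (simp add: mod_Suc_eq)
          ultimately show ?case by simp
        qed
        from this[of "k' + m - k"] have "q ((k + (k' + m - k)) mod m) \<le> 0" .
        moreover have "k + (k' + m - k) = k' + m" using k by simp
        ultimately show False using k' by simp
      qed
      then obtain l where l: "l < m" "q l \<le> 0" "q (Suc l mod m) > 0" by blast
      define l1 where "l1 = Suc l mod m"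
      define l2 where "l2 = Suc l1 mod m"
      have l1m: "l1 < m" and l2m: "l2 < m" unfolding l1_def l2_def using m3 by auto
      have p1: "prd l1 = l" unfolding l1_def using prd_suc[OF l(1)] .
      have p2: "prd l2 = l1" unfolding l2_def using prd_suc[OF l1m] .
      have Yl: "XS y l = 0" using off[OF l(1) l(2)] by simp
      have q1: "q l1 > 0" using l(3) l1_def by simp
      have q1e: "q l1 = e * XS y l1 - P" unfolding q_def using p1 Yl by simp
      have Y2nn: "XS y l2 \<ge> 0" unfolding XS_def using ynn by (simp add: sum_nonneg)
      have q2e: "q l2 = e * XS y l2 + q l1" unfolding q_def using p2 q1e p1 Yl by (simp add: algebra_simps)
      have q2: "q l2 > 0" using q2e q1 Y2nn e_def eps0 dl0 by (smt (verit) mult_nonneg_nonneg)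
      have Y2: "XS y l2 = real (card (C l2)) * (q l2 / eps)" using on[OF l2m q2] by simp
      have n2: "real (card (C l2)) \<ge> 1" using card_ge1[OF l2m] .
      have "e * real (card (C l2)) > eps" using n2 epsdl dl0 eps0 unfolding e_def
        by (smt (verit) mult_le_cancel_left1)
      hence "e * real (card (C l2)) * (q l2 / eps) > eps * (q l2 / eps)"
        using q2 eps0 by (intro mult_strict_right_mono) auto
      hence "e * XS y l2 > q l2" using Y2 eps0 by (simp add: algebra_simps)
      thus False using q2e q1 by simp
    qed
  qed
  show ?thesis
  proof
    fix i assume "i \<in> V"
    then obtain l where l: "l < m" "i \<in> C l" using inV by blast
    have "y i = q l / eps" using on[OF l(1)] allpos l by blast
    thus "y i > 0" using allpos l eps0 by simp
  qed
qed

end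


context cun
begin

lemma rowV: "i \<in> V \<Longrightarrow> (\<Sum>j\<in>V. IminusW E eps dl i j * v j) = v i - (\<Sum>j\<in>V. ctln E eps dl i j * v j)"
proof -
  assume i: "i \<in> V"
  have "(\<Sum>j\<in>V. IminusW E eps dl i j * v j) = (\<Sum>j\<in>V. (if i = j then v j else 0) - ctln E eps dl i j * v j)"
    by (intro sum.cong) (auto simp: IminusW_def algebra_simps)
  also have "\<dots> = (\<Sum>j\<in>V. (if i = j then v j else 0)) - (\<Sum>j\<in>V. ctln E eps dl i j * v j)"
    by (rule sum_subtractf)
  also have "(\<Sum>j\<in>V. (if i = j then v j else 0)) = v i" using i finV by simp
  finally show ?thesis .
qed

lemma alg_w:
  fixes d K X Xp e :: real
  assumes d: "d \<noteq> 0" and K: "K \<noteq> 0" and h: "d * X = K - e * Xp"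
  shows "e * X / K = e / d * (1 - e * Xp / K)"
proof -
  have "1 - e * Xp / K = (K - e * Xp) / K" using K by (simp add: field_simps)
  also have "\<dots> = d * X / K" using h by simp
  finally have "e / d * (1 - e * Xp / K) = e / d * (d * X / K)" by simp
  also have "\<dots> = e * X / K" using d by simp
  finally show ?thesis by simp
qed

lemma kernel:
  assumes cl: "\<forall>k<m. is_clique (C k) E"
    and ker: "\<forall>i\<in>V. (\<Sum>j\<in>V. IminusW E eps dl i j * v j) = 0"
  shows "\<forall>i\<in>V. v i = 0"
proof -
  define T where "T = (\<Sum>k<m. XS v k)"
  define e where "e = dl + eps"
  define R where "R l = e * XS v l + e * XS v (prd l) - (1 + dl) * T" for l
  define n where "n l = real (card (C l))" for l
  have n1: "l < m \<Longrightarrow> n l \<ge> 1" for l unfolding n_def by (rule card_ge1)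
  have Req: "eps * v i = R l" if l: "l < m" and i: "i \<in> C l" for l i
  proof -
    have iV: "i \<in> V" using CV[OF l] i by blast
    have "v i = (\<Sum>j\<in>V. ctln E eps dl i j * v j)" using ker iV rowV[OF iV, of v] by simp
    also have "\<dots> = - (1 - eps) * (XS v l - v i) - (1 + dl) * (T - XS v l) + (dl + eps) * XS v (prd l)"
      using key[OF l i, of v] clique_inner[OF cl[rule_format, OF l] l i, of v] unfolding T_def by simp
    finally show ?thesis unfolding R_def e_def by (simp add: algebra_simps)
  qed
  have vC: "v i = R l / eps" if l: "l < m" and i: "i \<in> C l" for l i
    using Req[OF l i] eps0 by (simp add: field_simps)
  have XSv: "XS v l = n l * (R l / eps)" if l: "l < m" for l
    unfolding n_def using XS_card[OF l, of v "R l / eps"] vC[OF l] by simp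
  define d where "d l = e - eps / n l" for l
  have dpos: "l < m \<Longrightarrow> d l > 0" for l
  proof -
    assume l: "l < m"
    have "eps / n l \<le> eps" using n1[OF l] eps0 by (simp add: divide_le_eq)
    thus ?thesis unfolding d_def e_def using dl0 by simp
  qed
  have dlt: "l < m \<Longrightarrow> d l < e" for l
  proof -
    assume l: "l < m"
    have "eps / n l > 0" using n1[OF l] eps0 by simp
    thus ?thesis unfolding d_def by simp
  qed
  have drec: "d l * XS v l = (1 + dl) * T - e * XS v (prd l)" if l: "l < m" for l
  proof -
    have "eps * XS v l = n l * R l" using XSv[OF l] eps0 by (simp add: field_simps)
    hence "eps / n l * XS v l = R l" using n1[OF l] by (simp add: field_simps)
    thus ?thesis unfolding d_def R_def by (simp add: algebra_simps)
  qed
  define b where "b l = e / d l" for l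
  have b1: "l < m \<Longrightarrow> b l > 1" for l unfolding b_def using dpos dlt by simp
  have m1: "m \<ge> 1" using m3 by simp
  have e0: "e > 0" and e1: "e < 1 + dl" using dl0 eps0 eps1 unfolding e_def by auto
  have T0: "T = 0"
  proof (rule ccontr)
    assume Tn: "T \<noteq> 0"
    define w where "w l = e * XS v l / ((1 + dl) * T)" for l
    have wrec: "w l = b l * (1 - w ((l + m - 1) mod m))" if l: "l < m" for l
    proof -
      have dl1: "1 + dl \<noteq> 0" using dl0 by simp
      have dn: "d l \<noteq> 0" using dpos[OF l] by simp
      have K: "(1 + dl) * T \<noteq> 0" using Tn dl1 by simp
      have "w l = b l * (1 - w (prd l))"
        unfolding w_def b_def by (rule alg_w[OF dn K drec[OF l]])
      thus ?thesis unfolding prd_def .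
    qed
    have wpos: "l < m \<Longrightarrow> 0 < w l \<and> w l < 1" for l
      using pos_cyc[where m=m and b=b and w=w, OF m1 b1 wrec] by blast
    have p1: "prd 1 = 0" using m3 by (simp add: prd_alt)
    have "w 1 = b 1 * (1 - w 0)" using wrec[of 1] m3 p1 by (simp add: prd_def[symmetric])
    moreover have "b 1 * (1 - w 0) > 1 * (1 - w 0)"
      using b1[of 1] wpos[of 0] m3 by (intro mult_strict_right_mono) auto
    ultimately have "w 0 + w 1 > 1" by simp
    moreover have "(\<Sum>l\<in>{0,1}. w l) \<le> (\<Sum>l<m. w l)"
      using wpos m3 by (intro sum_mono2) (auto intro: less_imp_le)
    moreover have "(\<Sum>l<m. w l) = e / (1 + dl)"
    proof -
      have "(\<Sum>l<m. w l) = e * T / ((1 + dl) * T)"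
        unfolding w_def T_def sum_divide_distrib[symmetric] sum_distrib_left[symmetric] ..
      thus ?thesis using Tn by simp
    qed
    moreover have "e / (1 + dl) < 1" using e1 dl0 by simp
    ultimately show False by simp
  qed
  have Xrec: "XS v l = - b l * XS v ((l + m - 1) mod m)" if l: "l < m" for l
  proof -
    have dn: "d l \<noteq> 0" using dpos[OF l] by simp
    show ?thesis using drec[OF l] T0 dn unfolding b_def prd_def by (simp add: field_simps)
  qed
  have X0: "l < m \<Longrightarrow> XS v l = 0" for l
    using grow_cyc[where m=m and b=b and X="XS v", OF m1 b1 Xrec] by blast
  show ?thesis
  proof
    fix i assume "i \<in> V"
    then obtain l where l: "l < m" "i \<in> C l" using inV by blast
    have "R l = 0" unfolding R_def using X0[OF l(1)] X0[OF prd_lt[OF l(1)]] T0 by simp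
    thus "v i = 0" using vC[OF l] by simp
  qed
qed

lemma unique_fp:
  assumes cl: "\<forall>k<m. is_clique (C k) E"
    and fx: "ctln_fixed_point V E eps dl th x" and fy: "ctln_fixed_point V E eps dl th y"
  shows "y = x"
proof -
  have px: "\<forall>i\<in>V. x i > 0" using all_full[OF cl fx] .
  have py: "\<forall>i\<in>V. y i > 0" using all_full[OF cl fy] .
  have ex: "x i = (\<Sum>j\<in>V. ctln E eps dl i j * x j) + th" if i: "i \<in> V" for i
  proof -
    have p: "x i > 0" using px i by blast
    show ?thesis using fp_eq[OF fx i] p by (simp add: max_def split: if_splits)
  qed
  have ey: "y i = (\<Sum>j\<in>V. ctln E eps dl i j * y j) + th" if i: "i \<in> V" for i
  proof -
    have p: "y i > 0" using py i by blast
    show ?thesis using fp_eq[OF fy i] p by (simp add: max_def split: if_splits)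
  qed
  define v where "v j = x j - y j" for j
  have "\<forall>i\<in>V. (\<Sum>j\<in>V. IminusW E eps dl i j * v j) = 0"
  proof
    fix i assume i: "i \<in> V"
    have "(\<Sum>j\<in>V. ctln E eps dl i j * v j) = (\<Sum>j\<in>V. ctln E eps dl i j * x j) - (\<Sum>j\<in>V. ctln E eps dl i j * y j)"
      unfolding v_def by (simp add: right_diff_distrib sum_subtractf)
    thus "(\<Sum>j\<in>V. IminusW E eps dl i j * v j) = 0"
      using rowV[OF i, of v] ex[OF i] ey[OF i] unfolding v_def by simp
  qed
  hence "\<forall>i\<in>V. v i = 0" using kernel[OF cl] by blast
  show "y = x"
  proof
    fix i show "y i = x i"
    proof (cases "i \<in> V")
      case True then show ?thesis using `\<forall>i\<in>V. v i = 0` unfolding v_def by simp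
    next
      case False then show ?thesis using fp_out[OF fx] fp_out[OF fy] by simp
    qed
  qed
qed

lemma clique_fp:
  assumes l: "l < m" and cl: "is_clique (C l) E"
  shows "has_full_support_fp (C l) E eps dl th"
proof -
  define n where "n = real (card (C l))"
  have n1: "n \<ge> 1" unfolding n_def by (rule card_ge1[OF l])
  define D where "D = eps + (1 - eps) * n"
  have D0: "D > 0" unfolding D_def using eps0 eps1 n1 by (simp add: add_pos_nonneg)
  define a where "a = th / D"
  have a0: "a > 0" unfolding a_def using D0 theta by simp
  define y where "y i = (if i \<in> C l then a else 0)" for i
  have XSy: "XS y l = n * a" unfolding n_def using XS_card[OF l, of y a] by (simp add: y_def)
  have yeq: "y i = (\<Sum>j\<in>C l. ctln E eps dl i j * y j) + th" if i: "i \<in> C l" for i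
  proof -
    have "(\<Sum>j\<in>C l. ctln E eps dl i j * y j) = - (1 - eps) * (n * a - a)"
      using clique_inner[OF cl l i, of y] XSy i by (simp add: y_def)
    moreover have "a * D = th" unfolding a_def using D0 by simp
    ultimately show ?thesis using i unfolding y_def D_def by (simp add: algebra_simps)
  qed
  show ?thesis unfolding has_full_support_fp_def
  proof (intro exI conjI)
    show "ctln_fixed_point (C l) E eps dl th y"
      unfolding ctln_fixed_point_def
    proof (intro conjI allI impI ballI)
      fix i assume "i \<notin> C l" then show "y i = 0" by (simp add: y_def)
    next
      fix i assume i: "i \<in> C l"
      show "0 \<le> y i" using a0 by (simp add: y_def)
      show "y i = max 0 ((\<Sum>j\<in>C l. ctln E eps dl i j * y j) + th)"
        using yeq[OF i] a0 i by (simp add: y_def)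
    qed
    show "supp (C l) y = C l" using a0 by (auto simp: supp_def y_def)
  qed
qed

end


lemma left_to_right_eig:
  fixes S :: "'a set" and A :: "'a \<Rightarrow> 'a \<Rightarrow> complex" and w :: "'a \<Rightarrow> complex"
  assumes fin: "finite S" and w: "\<exists>i\<in>S. w i \<noteq> 0"
    and lw: "\<forall>k\<in>S. (\<Sum>i\<in>S. w i * A i k) = lam * w k"
  shows "\<exists>v. (\<exists>i\<in>S. v i \<noteq> 0) \<and> (\<forall>i\<in>S. (\<Sum>j\<in>S. A i j * v j) = lam * v i)"
proof -
  define n where "n = card S"
  obtain f where f: "bij_betw f {0..<n} S" using ex_bij_betw_nat_finite[OF fin] n_def by blast
  have fS: "\<And>i. i < n \<Longrightarrow> f i \<in> S" using f by (auto simp: bij_betw_def)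
  have reidx: "\<And>g. (\<Sum>s\<in>S. g s) = (\<Sum>j\<in>{0..<n}. g (f j))"
    using sum.reindex_bij_betw[OF f] by metis
  define M where "M = mat n n (\<lambda>(i,j). A (f i) (f j) - (if i = j then lam else 0))"
  define w' where "w' = vec n (\<lambda>i. w (f i))"
  have Mc: "M \<in> carrier_mat n n" unfolding M_def by simp
  have tM: "transpose_mat M *\<^sub>v w' = 0\<^sub>v n"
  proof (rule eq_vecI)
    fix i assume i: "i < dim_vec (0\<^sub>v n :: complex vec)"
    hence i: "i < n" by simp
    have "(transpose_mat M *\<^sub>v w') $ i = (\<Sum>j\<in>{0..<n}. (A (f j) (f i) - (if j = i then lam else 0)) * w (f j))"
      using i by (simp add: M_def w'_def scalar_prod_def)
    also have "\<dots> = (\<Sum>j\<in>{0..<n}. w (f j) * A (f j) (f i) - (if j = i then lam * w (f j) else 0))"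
      by (intro sum.cong) (auto simp: algebra_simps)
    also have "\<dots> = (\<Sum>j\<in>{0..<n}. w (f j) * A (f j) (f i)) - (\<Sum>j\<in>{0..<n}. (if j = i then lam * w (f j) else 0))"
      by (rule sum_subtractf)
    also have "\<dots> = lam * w (f i) - lam * w (f i)"
    proof -
      have "(\<Sum>j\<in>{0..<n}. w (f j) * A (f j) (f i)) = (\<Sum>s\<in>S. w s * A s (f i))"
        by (rule reidx[symmetric])
      also have "\<dots> = lam * w (f i)" using lw fS[OF i] by blast
      finally show ?thesis using i by simp
    qed
    finally show "(transpose_mat M *\<^sub>v w') $ i = 0\<^sub>v n $ i" using i by simp
  qed (simp add: M_def)
  have w'0: "w' \<noteq> 0\<^sub>v n"
  proof
    assume h: "w' = 0\<^sub>v n"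
    from w obtain s where s: "s \<in> S" "w s \<noteq> 0" by blast
    then obtain i where i: "i < n" "f i = s" using f by (auto simp: bij_betw_def)
    have "w' $ i = 0" using h i by simp
    thus False using i s by (simp add: w'_def)
  qed
  have "det (transpose_mat M) = 0"
  proof -
    have "w' \<in> carrier_vec n" by (simp add: w'_def)
    thus ?thesis using det_0_iff_vec_prod_zero[of "transpose_mat M" n] Mc tM w'0 by auto
  qed
  hence "det M = 0" using det_transpose[OF Mc] by simp
  then obtain v' where v': "v' \<in> carrier_vec n" "v' \<noteq> 0\<^sub>v n" "M *\<^sub>v v' = 0\<^sub>v n"
    using det_0_iff_vec_prod_zero[OF Mc] by blast
  define v where "v = (\<lambda>s. v' $ (the_inv_into {0..<n} f s))"
  have vf: "\<And>i. i < n \<Longrightarrow> v (f i) = v' $ i"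
    unfolding v_def using f by (simp add: bij_betw_def the_inv_into_f_f)
  show ?thesis
  proof (intro exI conjI)
    show "\<exists>i\<in>S. v i \<noteq> 0"
    proof (rule ccontr)
      assume "\<not> (\<exists>i\<in>S. v i \<noteq> 0)"
      hence "\<And>i. i < n \<Longrightarrow> v' $ i = 0" using vf fS by force
      hence "v' = 0\<^sub>v n" using v'(1) by (intro eq_vecI) auto
      thus False using v'(2) by simp
    qed
    show "\<forall>i\<in>S. (\<Sum>j\<in>S. A i j * v j) = lam * v i"
    proof
      fix s assume s: "s \<in> S"
      then obtain i where i: "i < n" "f i = s" using f by (auto simp: bij_betw_def)
      have "(M *\<^sub>v v') $ i = (\<Sum>j\<in>{0..<n}. (A (f i) (f j) - (if i = j then lam else 0)) * v' $ j)"
        using i v'(1) by (simp add: M_def scalar_prod_def)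
      also have "\<dots> = (\<Sum>j\<in>{0..<n}. A (f i) (f j) * v' $ j - (if i = j then lam * v' $ j else 0))"
        by (intro sum.cong) (auto simp: algebra_simps)
      also have "\<dots> = (\<Sum>j\<in>{0..<n}. A (f i) (f j) * v' $ j) - (\<Sum>j\<in>{0..<n}. (if i = j then lam * v' $ j else 0))"
        by (rule sum_subtractf)
      also have "\<dots> = (\<Sum>j\<in>{0..<n}. A (f i) (f j) * v (f j)) - lam * v (f i)"
        using i vf by (simp add: vf[symmetric])
      finally have "(\<Sum>j\<in>{0..<n}. A (f i) (f j) * v (f j)) = lam * v (f i)"
        using v'(3) i by simp
      thus "(\<Sum>j\<in>S. A s j * v j) = lam * v s" using i by (simp add: reidx)
    qed
  qed
qed


lemma sq_sum_ge:
  fixes a :: "nat \<Rightarrow> real"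
  assumes pos: "\<And>i. i < m \<Longrightarrow> a i > 0"
  shows "(\<Sum>i<m. a i)^2 \<ge> (\<Sum>i<m. (a i)^2) \<and> (m \<ge> 2 \<longrightarrow> (\<Sum>i<m. a i)^2 > (\<Sum>i<m. (a i)^2))"
  using pos
proof (induction m)
  case 0 then show ?case by simp
next
  case (Suc m)
  have IH: "(\<Sum>i<m. a i)^2 \<ge> (\<Sum>i<m. (a i)^2)" using Suc by auto
  have nn: "\<And>i. i < m \<Longrightarrow> a i \<ge> 0" by (meson Suc.prems less_SucI less_imp_le)
  hence S0: "(\<Sum>i<m. a i) \<ge> 0" by (intro sum_nonneg) auto
  have am: "a m > 0" using Suc.prems by auto
  have eq: "(\<Sum>i<Suc m. a i)^2 = (\<Sum>i<m. a i)^2 + 2 * a m * (\<Sum>i<m. a i) + (a m)^2"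
    by (simp add: power2_eq_square algebra_simps)
  have ge: "2 * a m * (\<Sum>i<m. a i) \<ge> 0" using S0 am by simp
  have gt: "m \<ge> 1 \<Longrightarrow> 2 * a m * (\<Sum>i<m. a i) > 0"
  proof -
    assume m1: "m \<ge> 1"
    have "(\<Sum>i<m. a i) \<ge> (\<Sum>i\<in>{0}. a i)"
      using nn m1 by (intro sum_mono2) auto
    moreover have "a 0 > 0" using Suc.prems by simp
    ultimately have "(\<Sum>i<m. a i) > 0" by simp
    thus ?thesis using am by simp
  qed
  show ?case using IH ge gt eq by auto
qed

definition trc :: "nat \<Rightarrow> complex mat \<Rightarrow> complex" where
  "trc n X = (\<Sum>i<n. X $$ (i,i))"

lemma trc_comm:
  assumes "X \<in> carrier_mat n k" "Y \<in> carrier_mat k n"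
  shows "trc n (X * Y) = trc k (Y * X)"
proof -
  have "trc n (X * Y) = (\<Sum>i<n. \<Sum>j<k. X $$ (i,j) * Y $$ (j,i))"
    using assms unfolding trc_def by (intro sum.cong) (auto simp: scalar_prod_def lessThan_atLeast0)
  also have "\<dots> = (\<Sum>j<k. \<Sum>i<n. Y $$ (j,i) * X $$ (i,j))"
    by (subst sum.swap) (simp add: mult.commute)
  also have "\<dots> = trc k (Y * X)"
    using assms unfolding trc_def by (intro sum.cong) (auto simp: scalar_prod_def lessThan_atLeast0)
  finally show ?thesis .
qed

lemma neg_e2_unstable:
  fixes N :: "nat \<Rightarrow> nat \<Rightarrow> real"
  assumes neg: "(\<Sum>l<m. \<Sum>k<m. N l l * N k k - N l k * N k l) < 0"
  shows "\<exists>lam c. Re lam \<le> 0 \<and> (\<exists>l<m. c l \<noteq> 0) \<and>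
           (\<forall>l<m. (\<Sum>k<m. complex_of_real (N l k) * c k) = lam * c l)"
proof -
  define A where "A = mat m m (\<lambda>(l,k). complex_of_real (N l k))"
  have Ac: "A \<in> carrier_mat m m" by (simp add: A_def)
  obtain es where es: "char_poly A = (\<Prod>a\<leftarrow>es. [:- a, 1:])" "length es = m"
    using char_poly_factorized[OF Ac] by blast
  obtain B P Q where BPQ: "schur_decomposition A es = (B,P,Q)" by (cases "schur_decomposition A es") auto
  from schur_decomposition[OF Ac es(1) BPQ]
  have sim: "similar_mat_wit A B P Q" and ut: "upper_triangular B" and dg: "diag_mat B = es" by auto
  from sim Ac have Bc: "B \<in> carrier_mat m m" and Pc: "P \<in> carrier_mat m m" and Qc: "Q \<in> carrier_mat m m"
    and PQ: "P * Q = 1\<^sub>m m" and QP: "Q * P = 1\<^sub>m m" and APBQ: "A = P * B * Q"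
    unfolding similar_mat_wit_def by (auto simp: Let_def)
  show ?thesis
  proof (cases "\<exists>e\<in>set es. Re e \<le> 0")
    case True
    then obtain e where e: "e \<in> set es" "Re e \<le> 0" by blast
    have "poly (char_poly A) e = 0"
      unfolding es(1) poly_prod_list
      using e(1) by (induction es) auto
    hence "eigenvalue A e" using eigenvalue_root_char_poly[OF Ac] by simp
    then obtain v where v: "eigenvector A v e" unfolding eigenvalue_def by blast
    hence vc: "v \<in> carrier_vec m" and v0: "v \<noteq> 0\<^sub>v m" and Av: "A *\<^sub>v v = e \<cdot>\<^sub>v v"
      unfolding eigenvector_def using Ac by auto
    show ?thesis
    proof (intro exI[of _ e] exI[of _ "\<lambda>k. v $ k"] conjI)
      show "Re e \<le> 0" by fact
      show "\<exists>l<m. v $ l \<noteq> 0"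
      proof (rule ccontr)
        assume "\<not> (\<exists>l<m. v $ l \<noteq> 0)"
        hence "v = 0\<^sub>v m" using vc by (intro eq_vecI) auto
        thus False using v0 by simp
      qed
      show "\<forall>l<m. (\<Sum>k<m. complex_of_real (N l k) * v $ k) = e * v $ l"
      proof (intro allI impI)
        fix l assume l: "l < m"
        have "(A *\<^sub>v v) $ l = (e \<cdot>\<^sub>v v) $ l" using Av by simp
        thus "(\<Sum>k<m. complex_of_real (N l k) * v $ k) = e * v $ l"
          using l vc by (simp add: A_def scalar_prod_def lessThan_atLeast0)
      qed
    qed
  next
    case False
    hence posre: "\<And>i. i < m \<Longrightarrow> Re (B $$ (i,i)) > 0"
      using dg Bc by (fastforce simp: diag_mat_def not_le)
    have m2: "m \<ge> 2"
    proof (rule ccontr)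
      assume "\<not> m \<ge> 2"
      hence "m = 0 \<or> m = 1" by auto
      thus False using neg by auto
    qed
    have tA: "trc m A = trc m B"
    proof -
      have "trc m A = trc m ((P * B) * Q)" using APBQ by simp
      also have "\<dots> = trc m (Q * (P * B))" using Pc Bc Qc by (intro trc_comm) auto
      also have "Q * (P * B) = (Q * P) * B" using Pc Bc Qc by simp
      also have "\<dots> = B" using QP Bc by simp
      finally show ?thesis .
    qed
    have tAA: "trc m (A * A) = trc m (B * B)"
    proof -
      have "A * A = P * (B * B) * Q"
      proof -
        have "A * A = (P * B * Q) * (P * B * Q)" using APBQ by simp
        also have "\<dots> = P * B * (Q * P) * B * Q" using Pc Bc Qc by (simp add: assoc_mult_mat[of _ m m _ m _ m])
        also have "\<dots> = P * (B * B) * Q" using Pc Bc Qc QP by (simp add: assoc_mult_mat[of _ m m _ m _ m])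
        finally show ?thesis .
      qed
      hence "trc m (A * A) = trc m ((P * (B * B)) * Q)" by simp
      also have "\<dots> = trc m (Q * (P * (B * B)))" using Pc Bc Qc by (intro trc_comm) auto
      also have "Q * (P * (B * B)) = (Q * P) * (B * B)"
        using Pc Bc Qc by (simp add: assoc_mult_mat[of Q m m P m "B * B" m])
      also have "\<dots> = B * B" using QP Bc by simp
      finally show ?thesis .
    qed
    have tBB: "trc m (B * B) = (\<Sum>i<m. (B $$ (i,i))^2)"
      unfolding trc_def
    proof (intro sum.cong refl)
      fix i assume i: "i \<in> {..<m}"
      have "(B * B) $$ (i,i) = (\<Sum>k\<in>{0..<m}. B $$ (i,k) * B $$ (k,i))"
        using i Bc by (simp add: scalar_prod_def)
      also have "\<dots> = (\<Sum>k\<in>{0..<m}. if k = i then (B $$ (i,i))^2 else 0)"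
      proof (intro sum.cong refl)
        fix k assume k: "k \<in> {0..<m}"
        show "B $$ (i,k) * B $$ (k,i) = (if k = i then (B $$ (i,i))^2 else 0)"
        proof (cases "k < i")
          case True then show ?thesis using ut i Bc by (auto simp: upper_triangular_def)
        next
          case False
          show ?thesis
          proof (cases "k = i")
            case True then show ?thesis by (simp add: power2_eq_square)
          next
            case False2: False
            hence "i < k" using False by simp
            then show ?thesis using ut k Bc False2 by (auto simp: upper_triangular_def)
          qed
        qed
      qed
      also have "\<dots> = (B $$ (i,i))^2" using i by simp
      finally show "(B * B) $$ (i,i) = (B $$ (i,i))^2" .
    qed
    define t where "t = (\<Sum>l<m. N l l)"
    have trA: "trc m A = complex_of_real t"
      unfolding trc_def t_def A_def by simp
    have trAA: "trc m (A * A) = complex_of_real (\<Sum>l<m. \<Sum>k<m. N l k * N k l)"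
      unfolding trc_def A_def by (simp add: scalar_prod_def lessThan_atLeast0)
    define a where "a = (\<lambda>i. Re (B $$ (i,i)))"
    have sB: "(\<Sum>i<m. B $$ (i,i)) = complex_of_real t" using tA trA unfolding trc_def by simp
    have ta: "t = (\<Sum>i<m. a i)"
    proof -
      have "Re (\<Sum>i<m. B $$ (i,i)) = t" using sB by simp
      thus ?thesis unfolding a_def by simp
    qed
    have "(\<Sum>i<m. a i)^2 > (\<Sum>i<m. (a i)^2)"
      using sq_sum_ge[of m a] posre m2 unfolding a_def by auto
    moreover have "Re (\<Sum>i<m. (B $$ (i,i))^2) \<le> (\<Sum>i<m. (a i)^2)"
      unfolding a_def by (simp add: sum_mono power2_eq_square)
    moreover have "Re (\<Sum>i<m. (B $$ (i,i))^2) = (\<Sum>l<m. \<Sum>k<m. N l k * N k l)"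
    proof -
      have "(\<Sum>i<m. (B $$ (i,i))^2) = complex_of_real (\<Sum>l<m. \<Sum>k<m. N l k * N k l)"
        using trans[OF tBB[symmetric] trans[OF tAA[symmetric] trAA]] .
      thus ?thesis by (simp only: Re_complex_of_real)
    qed
    moreover have "t * t = (\<Sum>l<m. \<Sum>k<m. N l l * N k k)"
      unfolding t_def by (simp add: sum_product)
    moreover have "(\<Sum>l<m. \<Sum>k<m. N l l * N k k - N l k * N k l) =
        (\<Sum>l<m. \<Sum>k<m. N l l * N k k) - (\<Sum>l<m. \<Sum>k<m. N l k * N k l)"
      by (simp add: sum_subtractf)
    moreover have "t * t = (\<Sum>i<m. a i) * (\<Sum>i<m. a i)" using ta by simp
    ultimately have False using neg unfolding power2_eq_square by linarith
    thus ?thesis ..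
  qed
qed


context cun
begin

definition cm :: "'a \<Rightarrow> nat" where "cm i = (THE l. l < m \<and> i \<in> C l)"

lemma cmC: "l < m \<Longrightarrow> i \<in> C l \<Longrightarrow> cm i = l"
  unfolding cm_def by (rule the_equality) (auto dest: uniqC)

lemma A_out: "k < m \<Longrightarrow> l < m \<Longrightarrow> k \<noteq> l \<Longrightarrow> i \<in> C l \<Longrightarrow> j \<in> C k \<Longrightarrow>
    IminusW E eps dl i j = (if k = prd l then 1 - eps else 1 + dl)"
proof -
  assume a: "k < m" "l < m" "k \<noteq> l" "i \<in> C l" "j \<in> C k"
  have "i \<noteq> j" using a cdisj by blast
  thus ?thesis using ctln_out[OF a] by (simp add: IminusW_def)
qed

lemma A_in_sum:
  assumes l: "l < m" and i: "i \<in> C l"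
  shows "(\<Sum>k\<in>C l. IminusW E eps dl i k) = (1 + dl) * real (card (C l)) - (dl + eps) * real (card {k\<in>C l. E k i}) - dl"
proof -
  have iV: "i \<in> V" using CV[OF l] i by blast
  have ni: "\<not> E i i" using irr[OF iV] .
  have "(\<Sum>k\<in>C l. IminusW E eps dl i k) = (\<Sum>k\<in>C l. (1 + dl) - (if E k i then dl + eps else 0) - (if k = i then dl else 0))"
  proof (intro sum.cong refl)
    fix k assume "k \<in> C l"
    show "IminusW E eps dl i k = (1 + dl) - (if E k i then dl + eps else 0) - (if k = i then dl else 0)"
      using ni by (cases "k = i") (auto simp: IminusW_def ctln_def)
  qed
  also have "\<dots> = (\<Sum>k\<in>C l. (1 + dl)) - (\<Sum>k\<in>C l. (if E k i then dl + eps else 0)) - (\<Sum>k\<in>C l. (if k = i then dl else 0))"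
    by (simp add: sum_subtractf)
  also have "(\<Sum>k\<in>C l. (if E k i then dl + eps else 0)) = (dl + eps) * real (card {k\<in>C l. E k i})"
    using finC[OF l] by (simp add: sum.If_cases Int_def)
  also have "(\<Sum>k\<in>C l. (if k = i then dl else 0)) = dl" using finC[OF l] i by simp
  finally show ?thesis by simp
qed

lemma A_nn: "0 \<le> IminusW E eps dl i k"
  using eps1 dl0 by (simp add: IminusW_def ctln_def)

lemma unst_ii:
  assumes j: "j < m" and ud: "uniform_in_degree (C j) E"
    and fy: "ctln_fixed_point (C j) E eps dl th y" and sy: "supp (C j) y = C j"
    and ns: "\<not> stable_fp (C j) E eps dl y"
  shows "\<exists>lam. is_eigenvalue_on V (IminusW E eps dl) lam \<and> Re lam \<le> 0"
proof -
  let ?A = "IminusW E eps dl"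
  obtain lam where ev: "is_eigenvalue_on (C j) ?A lam" and re: "Re lam \<le> 0"
    using ns sy unfolding stable_fp_def by (auto simp: not_less)
  from ev obtain v where v0: "\<exists>i\<in>C j. v i \<noteq> 0"
    and veq: "\<forall>i\<in>C j. (\<Sum>k\<in>C j. complex_of_real (?A i k) * v k) = lam * v i"
    unfolding is_eigenvalue_on_def by blast
  have "\<exists>u. (\<exists>i\<in>C j. u i \<noteq> 0) \<and> (\<forall>i\<in>C j. (\<Sum>k\<in>C j. complex_of_real (?A k i) * u k) = lam * u i)"
  proof (rule left_to_right_eig[OF finC[OF j] v0])
    show "\<forall>k\<in>C j. (\<Sum>i\<in>C j. v i * complex_of_real (?A k i)) = lam * v k"
      using veq by (simp add: mult.commute)
  qed
  then obtain u where u0: "\<exists>i\<in>C j. u i \<noteq> 0"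
    and ueq: "\<forall>k\<in>C j. (\<Sum>i\<in>C j. complex_of_real (?A i k) * u i) = lam * u k" by blast
  obtain d where d: "\<forall>i\<in>C j. card {k\<in>C j. E k i} = d" using ud unfolding uniform_in_degree_def by blast
  define r where "r = (1 + dl) * real (card (C j)) - (dl + eps) * real d - dl"
  have rs: "i \<in> C j \<Longrightarrow> (\<Sum>k\<in>C j. ?A i k) = r" for i using A_in_sum[OF j, of i] d unfolding r_def by simp
  obtain i0 where i0: "i0 \<in> C j" using cne[OF j] by blast
  have r1: "r \<ge> 1"
  proof -
    have "?A i0 i0 \<le> (\<Sum>k\<in>C j. ?A i0 k)"
      using finC[OF j] i0 A_nn by (intro member_le_sum) auto
    thus ?thesis using rs[OF i0] by (simp add: IminusW_def ctln_def)
  qed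
  have su0: "(\<Sum>i\<in>C j. u i) = 0"
  proof -
    have "(\<Sum>k\<in>C j. \<Sum>i\<in>C j. complex_of_real (?A i k) * u i) = (\<Sum>k\<in>C j. lam * u k)"
      using ueq by simp
    also have "\<dots> = lam * (\<Sum>i\<in>C j. u i)" by (simp add: sum_distrib_left)
    finally have 1: "(\<Sum>k\<in>C j. \<Sum>i\<in>C j. complex_of_real (?A i k) * u i) = lam * (\<Sum>i\<in>C j. u i)" .
    have "(\<Sum>k\<in>C j. \<Sum>i\<in>C j. complex_of_real (?A i k) * u i) = (\<Sum>i\<in>C j. \<Sum>k\<in>C j. complex_of_real (?A i k) * u i)"
      by (rule sum.swap)
    also have "\<dots> = (\<Sum>i\<in>C j. complex_of_real (\<Sum>k\<in>C j. ?A i k) * u i)"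
      by (simp add: sum_distrib_right)
    also have "\<dots> = (\<Sum>i\<in>C j. complex_of_real r * u i)" using rs by simp
    also have "\<dots> = complex_of_real r * (\<Sum>i\<in>C j. u i)" by (simp add: sum_distrib_left)
    finally have "complex_of_real r * (\<Sum>i\<in>C j. u i) = lam * (\<Sum>i\<in>C j. u i)" using 1 by (rule trans[OF sym])
    hence "(complex_of_real r - lam) * (\<Sum>i\<in>C j. u i) = 0" by (simp add: left_diff_distrib)
    moreover have "complex_of_real r - lam \<noteq> 0"
    proof
      assume "complex_of_real r - lam = 0"
      hence "Re lam = r" by (metis Re_complex_of_real right_minus_eq)
      thus False using re r1 by simp
    qed
    ultimately show ?thesis by simp
  qed
  define u' where "u' i = (if i \<in> C j then u i else 0)" for i
  have left: "\<forall>k\<in>V. (\<Sum>i\<in>V. u' i * complex_of_real (?A i k)) = lam * u' k"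
  proof
    fix k assume kV: "k \<in> V"
    have "(\<Sum>i\<in>V. u' i * complex_of_real (?A i k)) = (\<Sum>i\<in>V. if i \<in> C j then u i * complex_of_real (?A i k) else 0)"
      unfolding u'_def by (intro sum.cong) auto
    also have "\<dots> = (\<Sum>i\<in>V \<inter> C j. u i * complex_of_real (?A i k))"
      using finV by (simp add: sum.inter_restrict)
    also have "V \<inter> C j = C j" using CV[OF j] by blast
    finally have eq: "(\<Sum>i\<in>V. u' i * complex_of_real (?A i k)) = (\<Sum>i\<in>C j. u i * complex_of_real (?A i k))" .
    show "(\<Sum>i\<in>V. u' i * complex_of_real (?A i k)) = lam * u' k"
    proof (cases "k \<in> C j")
      case True
      then show ?thesis using eq ueq unfolding u'_def by (simp add: mult.commute)
    next
      case False
      obtain l where l: "l < m" "k \<in> C l" using inV[OF kV] by blast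
      have lj: "l \<noteq> j" using False l by blast
      define kap where "kap = (if l = prd j then 1 - eps else 1 + dl)"
      have "(\<Sum>i\<in>C j. u i * complex_of_real (?A i k)) = (\<Sum>i\<in>C j. u i * complex_of_real kap)"
        using A_out[OF l(1) j lj _ l(2)] unfolding kap_def by (intro sum.cong) auto
      also have "\<dots> = complex_of_real kap * (\<Sum>i\<in>C j. u i)" by (simp add: sum_distrib_left mult.commute)
      also have "\<dots> = 0" using su0 by simp
      finally show ?thesis using eq False unfolding u'_def by simp
    qed
  qed
  have u'0: "\<exists>i\<in>V. u' i \<noteq> 0" using u0 CV[OF j] unfolding u'_def by auto
  from left_to_right_eig[OF finV u'0 left]
  obtain w where "(\<exists>i\<in>V. w i \<noteq> 0) \<and> (\<forall>i\<in>V. (\<Sum>k\<in>V. complex_of_real (?A i k) * w k) = lam * w i)"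
    by blast
  hence "is_eigenvalue_on V ?A lam" unfolding is_eigenvalue_on_def by blast
  thus ?thesis using re by blast
qed

lemma unst_iii:
  assumes cl: "\<forall>k<m. is_clique (C k) E"
  shows "\<exists>lam. is_eigenvalue_on V (IminusW E eps dl) lam \<and> Re lam \<le> 0"
proof -
  let ?A = "IminusW E eps dl"
  define n where "n k = real (card (C k))" for k
  have n1: "k < m \<Longrightarrow> n k \<ge> 1" for k unfolding n_def by (rule card_ge1)
  define N where "N l k = (if k = l then eps + (1 - eps) * n l else if k = prd l then (1 - eps) * n k else (1 + dl) * n k)" for l k
  have Nll: "l < m \<Longrightarrow> 0 \<le> N l l \<and> N l l \<le> n l" for l
  proof -
    assume l: "l < m"
    have a: "eps \<le> eps * n l" using n1[OF l] eps0 by simp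
    have b: "eps * n l \<le> 1 * n l" using eps1 n1[OF l] by (intro mult_right_mono) auto
    have c: "N l l = eps + n l - eps * n l" unfolding N_def by (simp add: algebra_simps)
    show ?thesis using a b c eps0 by linarith
  qed
  have Nlo: "l < m \<Longrightarrow> k < m \<Longrightarrow> k \<noteq> l \<Longrightarrow> N l k \<ge> (1 - eps) * n k" for l k
  proof -
    assume "l < m" "k < m" "k \<noteq> l"
    moreover have "(1 - eps) * n k \<le> (1 + dl) * n k" using n1[of k] eps0 dl0 `k < m` by (intro mult_right_mono) auto
    ultimately show ?thesis unfolding N_def by auto
  qed
  have trm: "N l l * N k k - N l k * N k l < 0" if l: "l < m" and k: "k < m" and kl: "k \<noteq> l" for l k
  proof -
    have p: "n l * n k \<ge> 1" using n1[OF l] n1[OF k] by (metis mult_mono' mult_1 zero_le_one)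
    have a: "N l l * N k k \<le> n l * n k" using Nll[OF l] Nll[OF k] by (intro mult_mono) auto
    have "N l k * N k l \<ge> (1 - eps) * (1 + dl) * (n l * n k)"
    proof (cases "k = prd l")
      case True
      have "l \<noteq> prd k" using True prd_prd_ne[OF l] by auto
      hence q1: "N k l = (1 + dl) * n l" using kl unfolding N_def by auto
      have q2: "N l k = (1 - eps) * n k" using True kl unfolding N_def by auto
      have "N l k * N k l = ((1 - eps) * n k) * ((1 + dl) * n l)" by (simp only: q1 q2)
      also have "\<dots> = (1 - eps) * (1 + dl) * (n l * n k)" by (simp only: mult_ac)
      finally show ?thesis by simp
    next
      case False
      hence e1: "N l k = (1 + dl) * n k" using kl unfolding N_def by auto
      have e2: "N k l \<ge> (1 - eps) * n l" using Nlo[OF k l] kl by auto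
      have "(1 + dl) * n k * N k l \<ge> (1 + dl) * n k * ((1 - eps) * n l)"
        using e2 dl0 n1[OF k] by (intro mult_left_mono) auto
      moreover have "(1 + dl) * n k * ((1 - eps) * n l) = (1 - eps) * (1 + dl) * (n l * n k)" by (simp only: mult_ac)
      moreover have "N l k * N k l = (1 + dl) * n k * N k l" by (simp only: e1)
      ultimately show ?thesis by linarith
    qed
    moreover have "(1 - eps) * (1 + dl) * (n l * n k) > 1 * (n l * n k)"
      using big p by (intro mult_strict_right_mono) auto
    ultimately show ?thesis using a by simp
  qed
  have neg: "(\<Sum>l<m. \<Sum>k<m. N l l * N k k - N l k * N k l) < 0"
  proof -
    have row: "(\<Sum>k<m. N l l * N k k - N l k * N k l) \<le> 0" if l: "l < m" for l
    proof (rule sum_nonpos)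
      fix k assume "k \<in> {..<m}"
      thus "N l l * N k k - N l k * N k l \<le> 0" using trm[OF l, of k] by (cases "k = l") auto
    qed
    have row0: "(\<Sum>k<m. N 0 0 * N k k - N 0 k * N k 0) < 0"
    proof -
      have "(\<Sum>k<m. N 0 0 * N k k - N 0 k * N k 0) < (\<Sum>k<m. (0::real))"
      proof (rule sum_strict_mono_ex1)
        show "finite {..<m}" by simp
        show "\<forall>k\<in>{..<m}. N 0 0 * N k k - N 0 k * N k 0 \<le> 0"
        proof
          fix k assume "k \<in> {..<m}"
          thus "N 0 0 * N k k - N 0 k * N k 0 \<le> 0" using trm[of 0 k] m3 by (cases "k = 0") auto
        qed
        show "\<exists>k\<in>{..<m}. N 0 0 * N k k - N 0 k * N k 0 < 0"
          using trm[of 0 1] m3 by auto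
      qed
      thus ?thesis by simp
    qed
    have "(\<Sum>l<m. \<Sum>k<m. N l l * N k k - N l k * N k l) < (\<Sum>l<m. (0::real))"
    proof (rule sum_strict_mono_ex1)
      show "finite {..<m}" by simp
      show "\<forall>l\<in>{..<m}. (\<Sum>k<m. N l l * N k k - N l k * N k l) \<le> 0" using row by auto
      show "\<exists>l\<in>{..<m}. (\<Sum>k<m. N l l * N k k - N l k * N k l) < 0" using row0 m3 by auto
    qed
    thus ?thesis by simp
  qed
  obtain lam c where re: "Re lam \<le> 0" and c0: "\<exists>l<m. c l \<noteq> 0"
    and ceq: "\<forall>l<m. (\<Sum>k<m. complex_of_real (N l k) * c k) = lam * c l"
    using neg_e2_unstable[OF neg] by blast
  define v where "v i = c (cm i)" for i
  have blk: "(\<Sum>j\<in>C k. ?A i j) = N l k" if l: "l < m" and k: "k < m" and i: "i \<in> C l" for l k i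
  proof (cases "k = l")
    case True
    have iV: "i \<in> V" using CV[OF l] i by blast
    have "(\<Sum>j\<in>C l. ?A i j) = (\<Sum>j\<in>C l. (if i = j then 1 else 0) - ctln E eps dl i j * 1)"
      by (simp add: IminusW_def)
    also have "\<dots> = (\<Sum>j\<in>C l. (if i = j then 1 else 0)) - (\<Sum>j\<in>C l. ctln E eps dl i j * 1)"
      by (rule sum_subtractf)
    also have "(\<Sum>j\<in>C l. (if i = j then 1 else (0::real))) = 1" using finC[OF l] i by simp
    also have "(\<Sum>j\<in>C l. ctln E eps dl i j * 1) = - (1 - eps) * (XS (\<lambda>_. 1) l - 1)"
      using clique_inner[OF cl[rule_format, OF l] l i, of "\<lambda>_. 1"] by simp
    also have "XS (\<lambda>_. 1) l = n l" unfolding XS_def n_def by simp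
    finally show ?thesis using True unfolding N_def by (simp add: algebra_simps)
  next
    case False
    have "(\<Sum>j\<in>C k. ?A i j) = (\<Sum>j\<in>C k. (if k = prd l then 1 - eps else 1 + dl))"
      using A_out[OF k l False i] by (intro sum.cong) auto
    also have "\<dots> = (if k = prd l then 1 - eps else 1 + dl) * n k" unfolding n_def by simp
    finally show ?thesis using False unfolding N_def by (simp add: mult.commute)
  qed
  have "is_eigenvalue_on V ?A lam"
    unfolding is_eigenvalue_on_def
  proof (intro exI[of _ v] conjI)
    show "\<exists>i\<in>V. v i \<noteq> 0"
    proof -
      obtain l where l: "l < m" "c l \<noteq> 0" using c0 by blast
      obtain i where i: "i \<in> C l" using cne[OF l(1)] by blast
      have "v i = c l" unfolding v_def using cmC[OF l(1) i] by simp
      moreover have "i \<in> V" using i CV[OF l(1)] by blast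
      ultimately show ?thesis using l(2) by (intro bexI[of _ i]) simp_all
    qed
    show "\<forall>i\<in>V. (\<Sum>j\<in>V. complex_of_real (?A i j) * v j) = lam * v i"
    proof
      fix i assume "i \<in> V"
      then obtain l where l: "l < m" and i: "i \<in> C l" using inV by blast
      have "(\<Sum>j\<in>V. complex_of_real (?A i j) * v j) = (\<Sum>k<m. \<Sum>j\<in>C k. complex_of_real (?A i j) * v j)"
        by (rule sumV)
      also have "\<dots> = (\<Sum>k<m. complex_of_real (N l k) * c k)"
      proof (intro sum.cong refl)
        fix k assume k: "k \<in> {..<m}"
        have "(\<Sum>j\<in>C k. complex_of_real (?A i j) * v j) = (\<Sum>j\<in>C k. complex_of_real (?A i j) * c k)"
          using cmC k unfolding v_def by (intro sum.cong) auto
        also have "\<dots> = complex_of_real (\<Sum>j\<in>C k. ?A i j) * c k" by (simp add: sum_distrib_right)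
        also have "\<dots> = complex_of_real (N l k) * c k" using blk[OF l _ i, of k] k by simp
        finally show "(\<Sum>j\<in>C k. complex_of_real (?A i j) * v j) = complex_of_real (N l k) * c k" .
      qed
      also have "\<dots> = lam * c l" using ceq l by blast
      also have "c l = v i" unfolding v_def using cmC[OF l i] by simp
      finally show "(\<Sum>j\<in>V. complex_of_real (?A i j) * v j) = lam * v i" .
    qed
  qed
  thus ?thesis using re by blast
qed

end

theorem theorem5:
  fixes V :: "'a set" and E :: "'a \<Rightarrow> 'a \<Rightarrow> bool" and m :: nat and C :: "nat \<Rightarrow> 'a set"
    and \<epsilon> \<delta> \<theta> :: real
  assumes graph: "simple_digraph V E"
    and m3: "m \<ge> 3"
    and cu: "cyclic_union V E m C"
    and legal: "legal_params \<epsilon> \<delta>"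
    and theta: "\<theta> > 0"
    and nondeg: "nondegenerate V E \<epsilon> \<delta> \<theta>"
    and nondeg_comp: "\<forall>k<m. nondegenerate (C k) E \<epsilon> \<delta> \<theta>"
  shows
    "((\<exists>k<m. \<not> has_full_support_fp (C k) E \<epsilon> \<delta> \<theta>) \<longrightarrow>
        \<not> has_full_support_fp V E \<epsilon> \<delta> \<theta>)
     \<and> (((\<forall>k<m. has_full_support_fp (C k) E \<epsilon> \<delta> \<theta>) \<and>
          (\<exists>j<m. uniform_in_degree (C j) E \<and>
             (\<exists>y. ctln_fixed_point (C j) E \<epsilon> \<delta> \<theta> y \<and> supp (C j) y = C j \<and>
                  \<not> stable_fp (C j) E \<epsilon> \<delta> y))) \<longrightarrow>
        (\<exists>x. ctln_fixed_point V E \<epsilon> \<delta> \<theta> x \<and> supp V x = V \<and> \<not> stable_fp V E \<epsilon> \<delta> x))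
     \<and> ((\<forall>k<m. is_clique (C k) E) \<longrightarrow>
        (\<exists>x. ctln_fixed_point V E \<epsilon> \<delta> \<theta> x \<and> supp V x = V \<and> \<not> stable_fp V E \<epsilon> \<delta> x \<and>
             (\<forall>y. ctln_fixed_point V E \<epsilon> \<delta> \<theta> y \<longrightarrow> y = x)))
     \<and> (((\<exists>k<m. \<not> has_full_support_fp (C k) E \<epsilon> \<delta> \<theta>) \<or>
          ((\<forall>k<m. has_full_support_fp (C k) E \<epsilon> \<delta> \<theta>) \<and>
           (\<exists>j<m. uniform_in_degree (C j) E \<and>
             (\<exists>y. ctln_fixed_point (C j) E \<epsilon> \<delta> \<theta> y \<and> supp (C j) y = C j \<and>
                  \<not> stable_fp (C j) E \<epsilon> \<delta> y))) \<or>
          (\<forall>k<m. is_clique (C k) E)) \<longrightarrow>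
        \<not> stable_motif V E \<epsilon> \<delta> \<theta>)"
proof -
  interpret cun V E m C \<epsilon> \<delta> \<theta> using graph m3 cu legal theta by unfold_locales
  have unst: "\<not> stable_fp V E \<epsilon> \<delta> x"
    if ex: "\<exists>lam. is_eigenvalue_on V (IminusW E \<epsilon> \<delta>) lam \<and> Re lam \<le> 0" and sx: "supp V x = V" for x
  proof
    assume st: "stable_fp V E \<epsilon> \<delta> x"
    from ex obtain lam where "is_eigenvalue_on V (IminusW E \<epsilon> \<delta>) lam" "Re lam \<le> 0" by blast
    thus False using st sx unfolding stable_fp_def by force
  qed
  let ?H2 = "(\<forall>k<m. has_full_support_fp (C k) E \<epsilon> \<delta> \<theta>) \<and>
          (\<exists>j<m. uniform_in_degree (C j) E \<and>
             (\<exists>y. ctln_fixed_point (C j) E \<epsilon> \<delta> \<theta> y \<and> supp (C j) y = C j \<and>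
                  \<not> stable_fp (C j) E \<epsilon> \<delta> y))"
  have P1: "(\<exists>k<m. \<not> has_full_support_fp (C k) E \<epsilon> \<delta> \<theta>) \<longrightarrow> \<not> has_full_support_fp V E \<epsilon> \<delta> \<theta>"
    using part1 by blast
  have U2: "?H2 \<Longrightarrow> \<exists>lam. is_eigenvalue_on V (IminusW E \<epsilon> \<delta>) lam \<and> Re lam \<le> 0"
    using unst_ii by blast
  have U3: "(\<forall>k<m. is_clique (C k) E) \<Longrightarrow> \<exists>lam. is_eigenvalue_on V (IminusW E \<epsilon> \<delta>) lam \<and> Re lam \<le> 0"
    using unst_iii by blast
  have P2: "?H2 \<longrightarrow> (\<exists>x. ctln_fixed_point V E \<epsilon> \<delta> \<theta> x \<and> supp V x = V \<and> \<not> stable_fp V E \<epsilon> \<delta> x)"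
  proof
    assume h: ?H2
    then obtain x where x: "ctln_fixed_point V E \<epsilon> \<delta> \<theta> x" "supp V x = V" using exist_full by blast
    thus "\<exists>x. ctln_fixed_point V E \<epsilon> \<delta> \<theta> x \<and> supp V x = V \<and> \<not> stable_fp V E \<epsilon> \<delta> x"
      using unst[OF U2[OF h]] by blast
  qed
  have P3: "(\<forall>k<m. is_clique (C k) E) \<longrightarrow>
        (\<exists>x. ctln_fixed_point V E \<epsilon> \<delta> \<theta> x \<and> supp V x = V \<and> \<not> stable_fp V E \<epsilon> \<delta> x \<and>
             (\<forall>y. ctln_fixed_point V E \<epsilon> \<delta> \<theta> y \<longrightarrow> y = x))"
  proof
    assume cl: "\<forall>k<m. is_clique (C k) E"
    have "\<forall>k<m. has_full_support_fp (C k) E \<epsilon> \<delta> \<theta>" using clique_fp cl by blast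
    then obtain x where x: "ctln_fixed_point V E \<epsilon> \<delta> \<theta> x" "supp V x = V" using exist_full by blast
    show "\<exists>x. ctln_fixed_point V E \<epsilon> \<delta> \<theta> x \<and> supp V x = V \<and> \<not> stable_fp V E \<epsilon> \<delta> x \<and>
             (\<forall>y. ctln_fixed_point V E \<epsilon> \<delta> \<theta> y \<longrightarrow> y = x)"
      using x unst[OF U3[OF cl]] unique_fp[OF cl x(1)] by blast
  qed
  have P4: "((\<exists>k<m. \<not> has_full_support_fp (C k) E \<epsilon> \<delta> \<theta>) \<or> ?H2 \<or> (\<forall>k<m. is_clique (C k) E)) \<longrightarrow>
        \<not> stable_motif V E \<epsilon> \<delta> \<theta>"
  proof
    assume h: "(\<exists>k<m. \<not> has_full_support_fp (C k) E \<epsilon> \<delta> \<theta>) \<or> ?H2 \<or> (\<forall>k<m. is_clique (C k) E)"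
    show "\<not> stable_motif V E \<epsilon> \<delta> \<theta>"
    proof
      assume "stable_motif V E \<epsilon> \<delta> \<theta>"
      then obtain x where x: "ctln_fixed_point V E \<epsilon> \<delta> \<theta> x" "supp V x = V" "stable_fp V E \<epsilon> \<delta> x"
        unfolding stable_motif_def by blast
      have hf: "has_full_support_fp V E \<epsilon> \<delta> \<theta>" using x unfolding has_full_support_fp_def by blast
      from h show False
      proof (elim disjE)
        assume "\<exists>k<m. \<not> has_full_support_fp (C k) E \<epsilon> \<delta> \<theta>"
        thus False using P1 hf by blast
      next
        assume h2: ?H2
        thus False using unst[OF U2[OF h2] x(2)] x(3) by blast
      next
        assume cl: "\<forall>k<m. is_clique (C k) E"
        thus False using unst[OF U3[OF cl] x(2)] x(3) by blast
      qed
    qed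
  qed
  show ?thesis using P1 P2 P3 P4 by blast
qed

end
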